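(* Under the standing setup (C1)–(C4), fix a small $\varepsilon>0$ and $L\ge4$ with $L\varepsilon<\gamma/4$, and define the blocks $Y_k$ as in the context. Then for every real $t$ there is $K_\varepsilon(t)>0$ such that for all $N\ge\exp(2/\varepsilon)$, $$\Big|E\exp\Big(\frac{it}{\sqrt N}\sum_{1\le k\le m(N)}Y_k\Big)-\prod_{1\le k\le m(N)}E\exp\Big(\frac{it}{\sqrt N}Y_k\Big)\Big|\le K_\varepsilon(t)N^{-\frac\varepsilon2\sqrt N}.$$
   Context: Standing setup. $(\Omega,\mathcal F,P)$ is a probability space, $\ell\ge1$, $X_1,\dots,X_\ell$ are real stationary processes $X_j(n)$, $n\ge0$, with $|X_j(n)|\le D$ a.s. $\{\mathcal F_{kl}\}$ is a family of sub-$\sigma$-algebras, $\mathcal F_{kl}\subset\mathcal F_{k'l'}$ for $k'\le k$, $l'\ge l$. $\alpha(n)=\sup_{k\ge0}\sup_{A\in\mathcal F_{-\infty,k},B\in\mathcal F_{k+n,\infty}}|P(A\cap B)-P(A)P(B)|$, $\beta_j(n)=\sup_{m\ge0}E|X_j(m)-E(X_j(m)\mid\mathcal F_{m-n,m+n})|$. (C1): $\alpha(n)+\max_j\beta_j(n)\le\kappa^{-1}e^{-\kappa n}$ for some $\kappa>0$ and all $n$. (C2): $q_1(n)=rn+p$ with integers $r>0,p\ge0$. There exist $\gamma\in(0,1)$, $n_0>1$ such that for $n\ge n_0$: (C3) $q_j(n+1)\ge q_j(n)+n^\gamma$ for $j=2,\dots,\ell$; (C4) $q_{j+1}([n^{1-\gamma}])\ge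 q_j(n)n^\gamma$ for $j=1,\dots,\ell-1$. $a_j=EX_j(0)$, $R(n)=\prod_{j=1}^\ell X_j(q_j(n))-\prod_{j=1}^\ell a_j$. Blocks: $\tau(N)=[N^{1-\varepsilon}]$, $\theta(N)=[N^{1-L\varepsilon}]$, $m(N)=[N/(\theta(N)+\tau(N))]$; for $k=1,\dots,m(N)$, $\Gamma_k(N)=\{n:\theta(N)+(k-1)(\theta(N)+\tau(N))\le n\le k(\theta(N)+\tau(N))\}$ and $Y_k=\sum_{n\in\Gamma_k(N)}R(n)$. *)

theory Defs
  imports "HOL-Probability.Probability"
begin

definition stationary_process :: "'a measure \<Rightarrow> (nat \<Rightarrow> 'a \<Rightarrow> real) \<Rightarrow> bool" where
  "stationary_process M X \<longleftrightarrow>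
     (\<forall>n. X n \<in> borel_measurable M) \<and>
     (\<forall>s. distr M (Pi\<^sub>M UNIV (\<lambda>_. borel)) (\<lambda>\<omega> n. X (n + s) \<omega>)
          = distr M (Pi\<^sub>M UNIV (\<lambda>_. borel)) (\<lambda>\<omega> n. X n \<omega>))"

text \<open>Strong mixing coefficient alpha(n); the sigma-algebras F k l are indexed by extended
  reals so that -\<infinity> and \<infinity> are allowed (only integer / infinite indices are used).\<close>
definition mix_alpha :: "'a measure \<Rightarrow> (ereal \<Rightarrow> ereal \<Rightarrow> 'a measure) \<Rightarrow> nat \<Rightarrow> real" where
  "mix_alpha M F n =
     (SUP k\<in>(UNIV::nat set). SUP AB\<in>sets (F (-\<infinity>) (ereal (real k))) \<times> sets (F (ereal (real (k + n))) \<infinity>).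
        \<bar>measure M (fst AB \<inter> snd AB) - measure M (fst AB) * measure M (snd AB)\<bar>)"

definition approx_beta :: "'a measure \<Rightarrow> (ereal \<Rightarrow> ereal \<Rightarrow> 'a measure) \<Rightarrow> (nat \<Rightarrow> 'a \<Rightarrow> real) \<Rightarrow> nat \<Rightarrow> real" where
  "approx_beta M F X n =
     (SUP m\<in>(UNIV::nat set).
        (\<integral>\<omega>. \<bar>X m \<omega> - real_cond_exp M (F (ereal (real m - real n)) (ereal (real m + real n))) (X m) \<omega>\<bar> \<partial>M))"

definition Rfun :: "'a measure \<Rightarrow> nat \<Rightarrow> (nat \<Rightarrow> nat \<Rightarrow> 'a \<Rightarrow> real) \<Rightarrow> (nat \<Rightarrow> nat \<Rightarrow> nat) \<Rightarrow> nat \<Rightarrow> 'a \<Rightarrow> real" where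
  "Rfun M l X q n \<omega> = (\<Prod>j=1..l. X j (q j n) \<omega>) - (\<Prod>j=1..l. (\<integral>\<omega>'. X j 0 \<omega>' \<partial>M))"

definition tau_blk :: "real \<Rightarrow> nat \<Rightarrow> nat" where
  "tau_blk \<epsilon> N = nat \<lfloor>real N powr (1 - \<epsilon>)\<rfloor>"

definition theta_blk :: "real \<Rightarrow> real \<Rightarrow> nat \<Rightarrow> nat" where
  "theta_blk L \<epsilon> N = nat \<lfloor>real N powr (1 - L * \<epsilon>)\<rfloor>"

definition m_blk :: "real \<Rightarrow> real \<Rightarrow> nat \<Rightarrow> nat" where
  "m_blk L \<epsilon> N = nat \<lfloor>real N / real (theta_blk L \<epsilon> N + tau_blk \<epsilon> N)\<rfloor>"

definition Gamma_blk :: "real \<Rightarrow> real \<Rightarrow> nat \<Rightarrow> nat \<Rightarrow> nat set" where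
  "Gamma_blk L \<epsilon> N k = {n. theta_blk L \<epsilon> N + (k - 1) * (theta_blk L \<epsilon> N + tau_blk \<epsilon> N) \<le> n
                          \<and> n \<le> k * (theta_blk L \<epsilon> N + tau_blk \<epsilon> N)}"

definition Y_blk :: "'a measure \<Rightarrow> nat \<Rightarrow> (nat \<Rightarrow> nat \<Rightarrow> 'a \<Rightarrow> real) \<Rightarrow> (nat \<Rightarrow> nat \<Rightarrow> nat)
                      \<Rightarrow> real \<Rightarrow> real \<Rightarrow> nat \<Rightarrow> nat \<Rightarrow> 'a \<Rightarrow> real" where
  "Y_blk M l X q L \<epsilon> N k \<omega> = (\<Sum>n\<in>Gamma_blk L \<epsilon> N k. Rfun M l X q n \<omega>)"

end

theory Submission
  imports Defs "HOL-Real_Asymp.Real_Asymp"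
begin

lemma cov_step:
  assumes M: "prob_space M" and sub: "subalgebra M H"
    and f: "f \<in> borel_measurable H" and fb: "\<And>x. x \<in> space M \<Longrightarrow> \<bar>f x\<bar> \<le> Bf"
    and g: "g \<in> borel_measurable M" and gb: "\<And>x. x \<in> space M \<Longrightarrow> \<bar>g x\<bar> \<le> Bg"
  shows "\<exists>B\<in>sets H. \<bar>(\<integral>x. f x * g x \<partial>M) - (\<integral>x. f x \<partial>M) * (\<integral>x. g x \<partial>M)\<bar>
     \<le> Bf * ((\<integral>x. (if x \<in> B then 1 else -1) * g x \<partial>M) - (\<integral>x. (if x \<in> B then 1 else -1::real) \<partial>M) * (\<integral>x. g x \<partial>M))"
proof -
  interpret prob_space M by (rule M)
  interpret finite_measure_subalgebra M H
    by unfold_locales (rule sub)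
  have fM: "f \<in> borel_measurable M" by (rule measurable_from_subalg[OF sub f])
  have sp: "space H = space M" using sub by (simp add: subalgebra_def)
  have gi: "integrable M g" by (rule integrable_const_bound[where B=Bg]) (auto simp: gb g)
  have fi: "integrable M f" by (rule integrable_const_bound[where B=Bf]) (auto simp: fb fM)
  have fgi: "integrable M (\<lambda>x. f x * g x)"
    by (rule integrable_const_bound[where B="Bf*Bg"]) (auto simp: fb gb fM g abs_mult intro!: mult_mono order.trans[OF abs_ge_zero fb] borel_measurable_times)
  define W where "W = real_cond_exp M H g"
  define c where "c = (\<integral>x. g x \<partial>M)"
  have Wm: "W \<in> borel_measurable H" unfolding W_def by simp
  have WmM: "W \<in> borel_measurable M" unfolding W_def by simp
  have Wi: "integrable M W" "(\<integral>x. W x \<partial>M) = c" unfolding W_def c_def using real_cond_exp_int[OF gi] by auto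
  have fW: "integrable M (\<lambda>x. f x * W x)" "(\<integral>x. f x * W x \<partial>M) = (\<integral>x. f x * g x \<partial>M)"
    unfolding W_def using real_cond_exp_intg[OF fgi f g] by auto
  define B where "B = {x \<in> space H. c \<le> W x}"
  have Bs: "B \<in> sets H" unfolding B_def using Wm by measurable
  define \<xi> where "\<xi> = (\<lambda>x. if x \<in> B then 1 else -1::real)"
  have \<xi>m: "\<xi> \<in> borel_measurable H" unfolding \<xi>_def using Bs by measurable
  have \<xi>mM: "\<xi> \<in> borel_measurable M" by (rule measurable_from_subalg[OF sub \<xi>m])
  have \<xi>i: "integrable M \<xi>" by (rule integrable_const_bound[where B=1]) (auto simp: \<xi>mM, auto simp: \<xi>_def)
  have \<xi>gi: "integrable M (\<lambda>x. \<xi> x * g x)"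
  proof (rule integrable_const_bound[where B="Bg"])
    show "(\<lambda>x. \<xi> x * g x) \<in> borel_measurable M" using \<xi>mM g by (rule borel_measurable_times)
  qed (auto simp: \<xi>_def gb)
  have \<xi>W: "integrable M (\<lambda>x. \<xi> x * W x)" "(\<integral>x. \<xi> x * W x \<partial>M) = (\<integral>x. \<xi> x * g x \<partial>M)"
    using real_cond_exp_intg[OF \<xi>gi \<xi>m g] unfolding W_def by auto
  have absi: "integrable M (\<lambda>x. \<bar>W x - c\<bar>)" using Wi by auto
  have "(\<integral>x. f x * g x \<partial>M) - (\<integral>x. f x \<partial>M) * c = (\<integral>x. f x * (W x - c) \<partial>M)"
    using fW fi by (simp add: right_diff_distrib)
  also have "\<bar>\<dots>\<bar> \<le> (\<integral>x. \<bar>f x * (W x - c)\<bar> \<partial>M)" by (rule integral_abs_bound)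
  also have "\<dots> \<le> (\<integral>x. Bf * \<bar>W x - c\<bar> \<partial>M)"
  proof (rule integral_mono)
    show "integrable M (\<lambda>x. \<bar>f x * (W x - c)\<bar>)"
      using fW fi by (simp add: right_diff_distrib)
    show "integrable M (\<lambda>x. Bf * \<bar>W x - c\<bar>)" using Wi by auto
    fix x assume "x \<in> space M"
    then show "\<bar>f x * (W x - c)\<bar> \<le> Bf * \<bar>W x - c\<bar>"
      by (simp add: abs_mult mult_right_mono fb)
  qed
  also have "(\<integral>x. Bf * \<bar>W x - c\<bar> \<partial>M) = Bf * (\<integral>x. \<bar>W x - c\<bar> \<partial>M)" by simp
  also have "(\<integral>x. \<bar>W x - c\<bar> \<partial>M) = (\<integral>x. \<xi> x * W x - c * \<xi> x \<partial>M)"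
    by (rule Bochner_Integration.integral_cong) (auto simp: \<xi>_def B_def sp)
  also have "\<dots> = (\<integral>x. \<xi> x * g x \<partial>M) - c * (\<integral>x. \<xi> x \<partial>M)"
    using \<xi>W \<xi>i by simp
  finally show ?thesis using Bs unfolding \<xi>_def c_def by (auto simp: mult.commute)
qed

lemma sign_prod_cov:
  assumes M: "prob_space M" and A: "A \<in> sets M" and B: "B \<in> sets M"
  shows "(\<integral>x. (if x \<in> A then 1 else -1) * (if x \<in> B then 1 else -1::real) \<partial>M)
     - (\<integral>x. (if x \<in> A then 1 else -1::real) \<partial>M) * (\<integral>x. (if x \<in> B then 1 else -1::real) \<partial>M)
     = 4 * (measure M (A \<inter> B) - measure M A * measure M B)"
proof -
  interpret prob_space M by (rule M)
  have AB: "A \<inter> B \<in> sets M" using A B by auto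
  have e1: "\<And>C. C \<in> sets M \<Longrightarrow> (\<integral>x. (if x \<in> C then 1 else -1::real) \<partial>M) = 2 * prob C - 1"
  proof -
    fix C assume C: "C \<in> sets M"
    have "(\<integral>x. (if x \<in> C then 1 else -1::real) \<partial>M) = (\<integral>x. 2 * indicator C x - 1 \<partial>M)"
      by (rule Bochner_Integration.integral_cong) (auto simp: indicator_def)
    also have "\<dots> = 2 * prob C - 1"
      using C by (subst Bochner_Integration.integral_diff) (auto simp: prob_space less_top[symmetric] intro!: integrable_real_indicator)
    finally show "(\<integral>x. (if x \<in> C then 1 else -1::real) \<partial>M) = 2 * prob C - 1" .
  qed
  have "(\<integral>x. (if x \<in> A then 1 else -1) * (if x \<in> B then 1 else -1::real) \<partial>M)
      = (\<integral>x. 4 * indicator (A \<inter> B) x - 2 * indicator A x - 2 * indicator B x + 1 \<partial>M)"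
    by (rule Bochner_Integration.integral_cong) (auto simp: indicator_def)
  also have "\<dots> = 4 * prob (A \<inter> B) - 2 * prob A - 2 * prob B + 1"
  proof -
    have i: "\<And>C. C \<in> sets M \<Longrightarrow> integrable M (indicat_real C)"
      by (auto simp: less_top[symmetric] intro!: integrable_real_indicator)
    have iA: "integrable M (indicat_real A)" and iB: "integrable M (indicat_real B)"
      and iAB: "integrable M (indicat_real (A \<inter> B))" using i A B AB by auto
    show ?thesis using iA iB iAB A B AB by (simp add: prob_space)
  qed
  finally have X: "(\<integral>x. (if x \<in> A then 1 else -1) * (if x \<in> B then 1 else -1::real) \<partial>M) = 4 * prob (A \<inter> B) - 2 * prob A - 2 * prob B + 1" .
  show ?thesis unfolding X e1[OF A] e1[OF B] by (simp add: algebra_simps)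
qed

lemma cov_real:
  assumes M: "prob_space M" and subG: "subalgebra M G" and subH: "subalgebra M H"
    and alpha: "\<And>A B. A \<in> sets G \<Longrightarrow> B \<in> sets H \<Longrightarrow> \<bar>measure M (A \<inter> B) - measure M A * measure M B\<bar> \<le> a"
    and U: "U \<in> borel_measurable G" and Ub: "\<And>x. x \<in> space M \<Longrightarrow> \<bar>U x\<bar> \<le> B1"
    and V: "V \<in> borel_measurable H" and Vb: "\<And>x. x \<in> space M \<Longrightarrow> \<bar>V x\<bar> \<le> B2"
  shows "\<bar>(\<integral>x. U x * V x \<partial>M) - (\<integral>x. U x \<partial>M) * (\<integral>x. V x \<partial>M)\<bar> \<le> 4 * a * B1 * B2"
proof -
  interpret prob_space M by (rule M)
  obtain x0 where x0: "x0 \<in> space M" using not_empty by blast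
  have B1: "B1 \<ge> 0" using Ub[OF x0] by linarith
  have B2: "B2 \<ge> 0" using Vb[OF x0] by linarith
  have UM: "U \<in> borel_measurable M" by (rule measurable_from_subalg[OF subG U])
  obtain B where B: "B \<in> sets H" and
    c1: "\<bar>(\<integral>x. V x * U x \<partial>M) - (\<integral>x. V x \<partial>M) * (\<integral>x. U x \<partial>M)\<bar>
     \<le> B2 * ((\<integral>x. (if x \<in> B then 1 else -1) * U x \<partial>M) - (\<integral>x. (if x \<in> B then 1 else -1::real) \<partial>M) * (\<integral>x. U x \<partial>M))"
    using cov_step[OF M subH V Vb UM Ub] by blast
  have BM: "B \<in> sets M" using B subH by (auto simp: subalgebra_def)
  have \<xi>m: "(\<lambda>x. if x \<in> B then 1 else -1::real) \<in> borel_measurable M" using BM by measurable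
  have \<xi>b: "\<And>x. x \<in> space M \<Longrightarrow> \<bar>if x \<in> B then 1 else -1::real\<bar> \<le> 1" by auto
  obtain A where A: "A \<in> sets G" and
    c2: "\<bar>(\<integral>x. U x * (if x \<in> B then 1 else -1) \<partial>M) - (\<integral>x. U x \<partial>M) * (\<integral>x. (if x \<in> B then 1 else -1::real) \<partial>M)\<bar>
     \<le> B1 * ((\<integral>x. (if x \<in> A then 1 else -1) * (if x \<in> B then 1 else -1::real) \<partial>M) - (\<integral>x. (if x \<in> A then 1 else -1::real) \<partial>M) * (\<integral>x. (if x \<in> B then 1 else -1::real) \<partial>M))"
    using cov_step[OF M subG U Ub \<xi>m \<xi>b] by blast
  have AM: "A \<in> sets M" using A subG by (auto simp: subalgebra_def)
  have c3: "B1 * ((\<integral>x. (if x \<in> A then 1 else -1) * (if x \<in> B then 1 else -1::real) \<partial>M) - (\<integral>x. (if x \<in> A then 1 else -1::real) \<partial>M) * (\<integral>x. (if x \<in> B then 1 else -1::real) \<partial>M)) = B1 * (4 * (measure M (A \<inter> B) - measure M A * measure M B))"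
    using sign_prod_cov[OF M AM BM] by simp
  have c4: "B1 * (4 * (measure M (A \<inter> B) - measure M A * measure M B)) \<le> B1 * (4 * a)"
    using alpha[OF A B] B1 by (intro mult_left_mono) auto
  have "\<bar>(\<integral>x. U x * V x \<partial>M) - (\<integral>x. U x \<partial>M) * (\<integral>x. V x \<partial>M)\<bar>
       = \<bar>(\<integral>x. V x * U x \<partial>M) - (\<integral>x. V x \<partial>M) * (\<integral>x. U x \<partial>M)\<bar>"
    by (simp add: mult.commute)
  also have "\<dots> \<le> B2 * ((\<integral>x. (if x \<in> B then 1 else -1) * U x \<partial>M) - (\<integral>x. (if x \<in> B then 1 else -1::real) \<partial>M) * (\<integral>x. U x \<partial>M))"
    by (rule c1)
  also have "\<dots> \<le> B2 * (B1 * (4 * a))"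
  proof (rule mult_left_mono[OF _ B2])
    have "(\<integral>x. (if x \<in> B then 1 else -1) * U x \<partial>M) - (\<integral>x. (if x \<in> B then 1 else -1::real) \<partial>M) * (\<integral>x. U x \<partial>M)
      \<le> \<bar>(\<integral>x. U x * (if x \<in> B then 1 else -1) \<partial>M) - (\<integral>x. U x \<partial>M) * (\<integral>x. (if x \<in> B then 1 else -1::real) \<partial>M)\<bar>"
      by (simp add: mult.commute)
    then show "(\<integral>x. (if x \<in> B then 1 else -1) * U x \<partial>M) - (\<integral>x. (if x \<in> B then 1 else -1::real) \<partial>M) * (\<integral>x. U x \<partial>M) \<le> B1 * (4 * a)"
      using c2 c3 c4 by linarith
  qed
  finally show ?thesis by (simp add: algebra_simps)
qed

lemma cov_complex:
  fixes U V :: "'a \<Rightarrow> complex"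
  assumes M: "prob_space M" and subG: "subalgebra M G" and subH: "subalgebra M H"
    and alpha: "\<And>A B. A \<in> sets G \<Longrightarrow> B \<in> sets H \<Longrightarrow> \<bar>measure M (A \<inter> B) - measure M A * measure M B\<bar> \<le> a"
    and U: "U \<in> borel_measurable G" and Ub: "\<And>x. x \<in> space M \<Longrightarrow> norm (U x) \<le> B1"
    and V: "V \<in> borel_measurable H" and Vb: "\<And>x. x \<in> space M \<Longrightarrow> norm (V x) \<le> B2"
  shows "norm ((\<integral>x. U x * V x \<partial>M) - (\<integral>x. U x \<partial>M) * (\<integral>x. V x \<partial>M)) \<le> 16 * a * B1 * B2"
proof -
  interpret prob_space M by (rule M)
  define ur where "ur = (\<lambda>x. Re (U x))"
  define ui where "ui = (\<lambda>x. Im (U x))"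
  define vr where "vr = (\<lambda>x. Re (V x))"
  define vi where "vi = (\<lambda>x. Im (V x))"
  have m: "ur \<in> borel_measurable G" "ui \<in> borel_measurable G" "vr \<in> borel_measurable H" "vi \<in> borel_measurable H"
    unfolding ur_def ui_def vr_def vi_def using U V by measurable
  have mM: "ur \<in> borel_measurable M" "ui \<in> borel_measurable M" "vr \<in> borel_measurable M" "vi \<in> borel_measurable M"
    using m measurable_from_subalg[OF subG] measurable_from_subalg[OF subH] by blast+
  have b: "\<And>x. x \<in> space M \<Longrightarrow> \<bar>ur x\<bar> \<le> B1" "\<And>x. x \<in> space M \<Longrightarrow> \<bar>ui x\<bar> \<le> B1"
    "\<And>x. x \<in> space M \<Longrightarrow> \<bar>vr x\<bar> \<le> B2" "\<And>x. x \<in> space M \<Longrightarrow> \<bar>vi x\<bar> \<le> B2"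
    unfolding ur_def ui_def vr_def vi_def
    using Ub Vb abs_Re_le_cmod abs_Im_le_cmod order_trans by blast+
  have c1: "\<bar>(\<integral>x. f x * g x \<partial>M) - (\<integral>x. f x \<partial>M) * (\<integral>x. g x \<partial>M)\<bar> \<le> 4 * a * B1 * B2"
    if "f \<in> {ur, ui}" "g \<in> {vr, vi}" for f g
    using that m b by (auto intro!: cov_real[OF M subG subH alpha])
  have UM: "U \<in> borel_measurable M" by (rule measurable_from_subalg[OF subG U])
  have VM: "V \<in> borel_measurable M" by (rule measurable_from_subalg[OF subH V])
  have iU: "integrable M U" by (rule integrable_const_bound[where B=B1]) (auto simp: Ub UM)
  have iV: "integrable M V" by (rule integrable_const_bound[where B=B2]) (auto simp: Vb VM)
  have ir: "integrable M (\<lambda>x. f x * g x)" if "f \<in> {ur, ui}" "g \<in> {vr, vi}" for f g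
  proof (rule integrable_const_bound[where B="B1*B2"])
    show "(\<lambda>x. f x * g x) \<in> borel_measurable M" using that mM by auto
    show "AE x in M. norm (f x * g x) \<le> B1 * B2"
    proof (rule AE_I2)
      fix x assume x: "x \<in> space M"
      have h: "\<bar>f x\<bar> \<le> B1" "\<bar>g x\<bar> \<le> B2" using that b x by auto
      then show "norm (f x * g x) \<le> B1 * B2"
        by (simp add: abs_mult) (rule mult_mono, auto intro: order.trans[OF abs_ge_zero])
    qed
  qed
  have iUV: "integrable M (\<lambda>x. U x * V x)"
  proof (rule integrable_const_bound[where B="B1*B2"])
    show "(\<lambda>x. U x * V x) \<in> borel_measurable M" using UM VM by auto
    show "AE x in M. norm (U x * V x) \<le> B1 * B2"
      using Ub Vb by (auto simp: norm_mult intro!: mult_mono order.trans[OF norm_ge_zero])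
  qed
  define C where "C = (\<integral>x. U x * V x \<partial>M) - (\<integral>x. U x \<partial>M) * (\<integral>x. V x \<partial>M)"
  have rU: "Re (\<integral>x. U x \<partial>M) = (\<integral>x. ur x \<partial>M)" "Im (\<integral>x. U x \<partial>M) = (\<integral>x. ui x \<partial>M)"
    "Re (\<integral>x. V x \<partial>M) = (\<integral>x. vr x \<partial>M)" "Im (\<integral>x. V x \<partial>M) = (\<integral>x. vi x \<partial>M)"
    unfolding ur_def ui_def vr_def vi_def using iU iV by simp_all
  have rUV: "Re (\<integral>x. U x * V x \<partial>M) = (\<integral>x. ur x * vr x \<partial>M) - (\<integral>x. ui x * vi x \<partial>M)"
  proof -
    have "Re (\<integral>x. U x * V x \<partial>M) = (\<integral>x. Re (U x * V x) \<partial>M)" by (rule integral_Re[OF iUV, symmetric])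
    also have "\<dots> = (\<integral>x. ur x * vr x - ui x * vi x \<partial>M)"
      by (rule Bochner_Integration.integral_cong) (auto simp: ur_def ui_def vr_def vi_def)
    also have "\<dots> = (\<integral>x. ur x * vr x \<partial>M) - (\<integral>x. ui x * vi x \<partial>M)" using ir by simp
    finally show ?thesis .
  qed
  have iUV': "Im (\<integral>x. U x * V x \<partial>M) = (\<integral>x. ur x * vi x \<partial>M) + (\<integral>x. ui x * vr x \<partial>M)"
  proof -
    have "Im (\<integral>x. U x * V x \<partial>M) = (\<integral>x. Im (U x * V x) \<partial>M)" by (rule integral_Im[OF iUV, symmetric])
    also have "\<dots> = (\<integral>x. ur x * vi x + ui x * vr x \<partial>M)"
      by (rule Bochner_Integration.integral_cong) (auto simp: ur_def ui_def vr_def vi_def)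
    also have "\<dots> = (\<integral>x. ur x * vi x \<partial>M) + (\<integral>x. ui x * vr x \<partial>M)" using ir by simp
    finally show ?thesis .
  qed
  have ReC: "Re C = ((\<integral>x. ur x * vr x \<partial>M) - (\<integral>x. ur x \<partial>M) * (\<integral>x. vr x \<partial>M))
       - ((\<integral>x. ui x * vi x \<partial>M) - (\<integral>x. ui x \<partial>M) * (\<integral>x. vi x \<partial>M))"
    unfolding C_def using rU rUV by simp
  have ImC: "Im C = ((\<integral>x. ur x * vi x \<partial>M) - (\<integral>x. ur x \<partial>M) * (\<integral>x. vi x \<partial>M))
       + ((\<integral>x. ui x * vr x \<partial>M) - (\<integral>x. ui x \<partial>M) * (\<integral>x. vr x \<partial>M))"
    unfolding C_def using rU iUV' by simp
  have "norm C \<le> \<bar>Re C\<bar> + \<bar>Im C\<bar>" by (rule cmod_le)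
  also have "\<dots> \<le> 16 * a * B1 * B2"
    unfolding ReC ImC using c1[of ur vr] c1[of ui vi] c1[of ur vi] c1[of ui vr] by auto
  finally show ?thesis unfolding C_def .
qed

lemma norm_prod_diff_le:
  fixes a b :: "'i \<Rightarrow> 'c::real_normed_field"
  assumes "finite I" and "\<And>i. i \<in> I \<Longrightarrow> norm (a i) \<le> B i" and "\<And>i. i \<in> I \<Longrightarrow> norm (b i) \<le> B i"
    and "\<And>i. i \<in> I \<Longrightarrow> 1 \<le> B i"
  shows "norm ((\<Prod>i\<in>I. a i) - (\<Prod>i\<in>I. b i)) \<le> (\<Prod>i\<in>I. B i) * (\<Sum>i\<in>I. norm (a i - b i))"
  using assms
proof (induction I rule: finite_induct)
  case empty
  then show ?case by simp
next
  case (insert x F)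
  have Bx: "1 \<le> B x" "norm (a x) \<le> B x" "norm (b x) \<le> B x" using insert.prems by auto
  have BF: "1 \<le> (\<Prod>i\<in>F. B i)" using insert.prems by (intro prod_ge_1) auto
  have naF: "norm (\<Prod>i\<in>F. a i) \<le> (\<Prod>i\<in>F. B i)"
    unfolding prod_norm[symmetric] using insert.prems by (intro prod_mono) auto
  have IH: "norm ((\<Prod>i\<in>F. a i) - (\<Prod>i\<in>F. b i)) \<le> (\<Prod>i\<in>F. B i) * (\<Sum>i\<in>F. norm (a i - b i))"
    using insert by auto
  have S0: "0 \<le> (\<Sum>i\<in>F. norm (a i - b i))" by (intro sum_nonneg) auto
  have "(\<Prod>i\<in>insert x F. a i) - (\<Prod>i\<in>insert x F. b i)
      = (a x - b x) * (\<Prod>i\<in>F. a i) + b x * ((\<Prod>i\<in>F. a i) - (\<Prod>i\<in>F. b i))"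
    using insert by (simp add: algebra_simps)
  also have "norm \<dots> \<le> norm (a x - b x) * (\<Prod>i\<in>F. B i) + B x * ((\<Prod>i\<in>F. B i) * (\<Sum>i\<in>F. norm (a i - b i)))"
    by (rule order.trans[OF norm_triangle_ineq]) (auto simp: norm_mult intro!: add_mono mult_mono naF IH Bx order.trans[OF norm_ge_zero Bx(2)])
  also have "\<dots> \<le> B x * (\<Prod>i\<in>F. B i) * (norm (a x - b x) + (\<Sum>i\<in>F. norm (a i - b i)))"
  proof -
    have "norm (a x - b x) \<le> B x * norm (a x - b x)"
      using mult_right_mono[OF Bx(1) norm_ge_zero[of "a x - b x"]] by simp
    then have "norm (a x - b x) * (\<Prod>i\<in>F. B i) \<le> B x * norm (a x - b x) * (\<Prod>i\<in>F. B i)"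
      using BF by (intro mult_right_mono) auto
    then show ?thesis by (simp add: algebra_simps)
  qed
  also have "\<dots> = (\<Prod>i\<in>insert x F. B i) * (\<Sum>i\<in>insert x F. norm (a i - b i))"
    using insert by simp
  finally show ?case .
qed

lemma norm_integral_le_const:
  fixes f :: "'a \<Rightarrow> 'b::{banach, second_countable_topology}"
  assumes M: "prob_space M" and b: "\<And>x. x \<in> space M \<Longrightarrow> norm (f x) \<le> B"
  shows "norm (integral\<^sup>L M f) \<le> B"
proof -
  interpret prob_space M by (rule M)
  obtain x0 where x0: "x0 \<in> space M" using not_empty by blast
  have B: "0 \<le> B" using b[OF x0] norm_ge_zero order.trans by blast
  show ?thesis
  proof (cases "integrable M f")
    case True
    have "norm (integral\<^sup>L M f) \<le> (\<integral>x. norm (f x) \<partial>M)" by (rule integral_norm_bound)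
    also have "\<dots> \<le> (\<integral>x. B \<partial>M)" using True b by (intro integral_mono) auto
    also have "\<dots> = B" by (simp add: prob_space)
    finally show ?thesis .
  next
    case False
    then show ?thesis using B by (simp add: not_integrable_integral_eq)
  qed
qed


lemma decouple:
  fixes U :: "nat \<Rightarrow> 'a \<Rightarrow> complex"
  assumes M: "prob_space M" and I: "finite I"
    and Pre: "\<And>i. i \<in> I \<Longrightarrow> subalgebra M (Pre i)"
    and Post: "\<And>i. i \<in> I \<Longrightarrow> subalgebra M (Post i)"
    and alpha: "\<And>i A B. i \<in> I \<Longrightarrow> A \<in> sets (Pre i) \<Longrightarrow> B \<in> sets (Post i) \<Longrightarrow>
                   \<bar>measure M (A \<inter> B) - measure M A * measure M B\<bar> \<le> a"
    and Um: "\<And>i. i \<in> I \<Longrightarrow> U i \<in> borel_measurable (Pre i)"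
    and Upost: "\<And>i i'. i \<in> I \<Longrightarrow> i' \<in> I \<Longrightarrow> i < i' \<Longrightarrow> U i' \<in> borel_measurable (Post i)"
    and Ub: "\<And>i x. i \<in> I \<Longrightarrow> x \<in> space M \<Longrightarrow> norm (U i x) \<le> Bd i"
  shows "norm ((\<integral>x. (\<Prod>i\<in>I. U i x) \<partial>M) - (\<Prod>i\<in>I. (\<integral>x. U i x \<partial>M))) \<le> 16 * a * card I * (\<Prod>i\<in>I. Bd i)"
proof -
  interpret prob_space M by (rule M)
  obtain x0 where x0: "x0 \<in> space M" using not_empty by blast
  have Bd0: "\<And>i. i \<in> I \<Longrightarrow> 0 \<le> Bd i" using Ub[OF _ x0] norm_ge_zero order.trans by blast
  have "J \<subseteq> I \<Longrightarrow> norm ((\<integral>x. (\<Prod>i\<in>J. U i x) \<partial>M) - (\<Prod>i\<in>J. (\<integral>x. U i x \<partial>M))) \<le> 16 * a * card J * (\<Prod>i\<in>J. Bd i)" for J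
  proof -
    assume JI: "J \<subseteq> I"
    have "finite J" using JI I finite_subset by blast
    then show ?thesis using JI
    proof (induction J rule: finite_linorder_min_induct)
      case empty
      then show ?case by (simp add: prob_space)
    next
      case (insert b A)
      have bI: "b \<in> I" and AI: "A \<subseteq> I" using insert.prems by auto
      have bA: "b \<notin> A" using insert.hyps by auto
      have subG: "subalgebra M (Pre b)" and subH: "subalgebra M (Post b)" using Pre Post bI by auto
      have a0: "0 \<le> a" using alpha[OF bI, of "{}" "{}"] subG subH by (auto simp: subalgebra_def)
      have UbM: "U b \<in> borel_measurable (Pre b)" using Um bI by auto
      have PA: "(\<lambda>x. \<Prod>i\<in>A. U i x) \<in> borel_measurable (Post b)"
        using AI insert.hyps by (intro borel_measurable_prod Upost[OF bI]) auto
      have nPA: "norm (\<Prod>i\<in>A. U i x) \<le> (\<Prod>i\<in>A. Bd i)" if "x \<in> space M" for x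
        unfolding prod_norm[symmetric] using AI Ub that by (intro prod_mono) auto
      have c1: "norm ((\<integral>x. U b x * (\<Prod>i\<in>A. U i x) \<partial>M) - (\<integral>x. U b x \<partial>M) * (\<integral>x. (\<Prod>i\<in>A. U i x) \<partial>M))
           \<le> 16 * a * Bd b * (\<Prod>i\<in>A. Bd i)"
        by (rule cov_complex[OF M subG subH alpha[OF bI] UbM _ PA nPA]) (use Ub bI in auto)
      have nUb: "norm (\<integral>x. U b x \<partial>M) \<le> Bd b"
        by (rule norm_integral_le_const[OF M]) (use Ub bI in auto)
      have IH: "norm ((\<integral>x. (\<Prod>i\<in>A. U i x) \<partial>M) - (\<Prod>i\<in>A. (\<integral>x. U i x \<partial>M))) \<le> 16 * a * card A * (\<Prod>i\<in>A. Bd i)"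
        using insert AI by auto
      have "(\<integral>x. (\<Prod>i\<in>insert b A. U i x) \<partial>M) - (\<Prod>i\<in>insert b A. (\<integral>x. U i x \<partial>M))
         = ((\<integral>x. U b x * (\<Prod>i\<in>A. U i x) \<partial>M) - (\<integral>x. U b x \<partial>M) * (\<integral>x. (\<Prod>i\<in>A. U i x) \<partial>M))
           + (\<integral>x. U b x \<partial>M) * ((\<integral>x. (\<Prod>i\<in>A. U i x) \<partial>M) - (\<Prod>i\<in>A. (\<integral>x. U i x \<partial>M)))"
        using insert.hyps bA by (simp add: algebra_simps)
      also have "norm \<dots> \<le> 16 * a * Bd b * (\<Prod>i\<in>A. Bd i) + Bd b * (16 * a * card A * (\<Prod>i\<in>A. Bd i))"
        by (rule order.trans[OF norm_triangle_ineq]) (auto simp: norm_mult intro!: add_mono c1 mult_mono nUb IH Bd0[OF bI])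
      also have "\<dots> = 16 * a * card (insert b A) * (\<Prod>i\<in>insert b A. Bd i)"
        using insert.hyps bA by (simp add: algebra_simps)
      finally show ?case .
    qed
  qed
  then show ?thesis by blast
qed

lemma integrable_bounded_pm:
  fixes f :: "'a \<Rightarrow> 'b::{banach, second_countable_topology}"
  assumes M: "prob_space M" and "f \<in> borel_measurable M" and "\<And>x. x \<in> space M \<Longrightarrow> norm (f x) \<le> B"
  shows "integrable M f"
proof -
  interpret prob_space M by (rule M)
  show ?thesis by (rule integrable_const_bound[where B=B]) (use assms in auto)
qed

lemma expand_dec:
  fixes cc :: "nat \<Rightarrow> 'b \<Rightarrow> complex" and w :: "nat \<Rightarrow> 'b \<Rightarrow> 'a \<Rightarrow> complex"
  assumes M: "prob_space M" and K: "finite K" and A: "\<And>k. k \<in> K \<Longrightarrow> finite (A k)"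
    and wm: "\<And>k a. k \<in> K \<Longrightarrow> a \<in> A k \<Longrightarrow> w k a \<in> borel_measurable M"
    and wb: "\<And>k a x. k \<in> K \<Longrightarrow> a \<in> A k \<Longrightarrow> x \<in> space M \<Longrightarrow> norm (w k a x) \<le> Bw k a"
  shows "norm ((\<integral>x. (\<Prod>k\<in>K. \<Sum>a\<in>A k. cc k a * w k a x) \<partial>M) - (\<Prod>k\<in>K. \<integral>x. (\<Sum>a\<in>A k. cc k a * w k a x) \<partial>M))
    \<le> (\<Sum>\<beta>\<in>PiE K A. (\<Prod>k\<in>K. norm (cc k (\<beta> k))) * norm ((\<integral>x. (\<Prod>k\<in>K. w k (\<beta> k) x) \<partial>M) - (\<Prod>k\<in>K. \<integral>x. w k (\<beta> k) x \<partial>M)))"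
proof -
  interpret prob_space M by (rule M)
  have iw: "integrable M (w k a)" if "k \<in> K" "a \<in> A k" for k a
    by (rule integrable_bounded_pm[OF M wm wb]) (use that in auto)
  have iP: "integrable M (\<lambda>x. \<Prod>k\<in>K. w k (\<beta> k) x)" if "\<beta> \<in> PiE K A" for \<beta>
  proof (rule integrable_bounded_pm[OF M, where B="\<Prod>k\<in>K. Bw k (\<beta> k)"])
    show "(\<lambda>x. \<Prod>k\<in>K. w k (\<beta> k) x) \<in> borel_measurable M"
      using that by (intro borel_measurable_prod wm) auto
    fix x assume "x \<in> space M"
    then show "norm (\<Prod>k\<in>K. w k (\<beta> k) x) \<le> (\<Prod>k\<in>K. Bw k (\<beta> k))"
      unfolding prod_norm[symmetric] using that wb by (intro prod_mono) auto
  qed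
  have e1: "(\<Prod>k\<in>K. \<Sum>a\<in>A k. cc k a * w k a x) = (\<Sum>\<beta>\<in>PiE K A. (\<Prod>k\<in>K. cc k (\<beta> k)) * (\<Prod>k\<in>K. w k (\<beta> k) x))" for x
    by (subst prod_sum_PiE[OF K A]) (auto simp: prod.distrib)
  have l: "(\<integral>x. (\<Prod>k\<in>K. \<Sum>a\<in>A k. cc k a * w k a x) \<partial>M)
      = (\<Sum>\<beta>\<in>PiE K A. (\<Prod>k\<in>K. cc k (\<beta> k)) * (\<integral>x. (\<Prod>k\<in>K. w k (\<beta> k) x) \<partial>M))"
    unfolding e1 by (subst Bochner_Integration.integral_sum) (auto intro: iP)
  have r: "(\<Prod>k\<in>K. \<integral>x. (\<Sum>a\<in>A k. cc k a * w k a x) \<partial>M)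
      = (\<Sum>\<beta>\<in>PiE K A. (\<Prod>k\<in>K. cc k (\<beta> k)) * (\<Prod>k\<in>K. \<integral>x. w k (\<beta> k) x \<partial>M))"
  proof -
    have "(\<Prod>k\<in>K. \<integral>x. (\<Sum>a\<in>A k. cc k a * w k a x) \<partial>M) = (\<Prod>k\<in>K. \<Sum>a\<in>A k. cc k a * (\<integral>x. w k a x \<partial>M))"
      by (intro prod.cong refl, subst Bochner_Integration.integral_sum) (auto intro: iw)
    also have "\<dots> = (\<Sum>\<beta>\<in>PiE K A. (\<Prod>k\<in>K. cc k (\<beta> k)) * (\<Prod>k\<in>K. \<integral>x. w k (\<beta> k) x \<partial>M))"
      by (subst prod_sum_PiE[OF K A]) (auto simp: prod.distrib)
    finally show ?thesis .
  qed
  have "(\<integral>x. (\<Prod>k\<in>K. \<Sum>a\<in>A k. cc k a * w k a x) \<partial>M) - (\<Prod>k\<in>K. \<integral>x. (\<Sum>a\<in>A k. cc k a * w k a x) \<partial>M)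
    = (\<Sum>\<beta>\<in>PiE K A. (\<Prod>k\<in>K. cc k (\<beta> k)) * ((\<integral>x. (\<Prod>k\<in>K. w k (\<beta> k) x) \<partial>M) - (\<Prod>k\<in>K. \<integral>x. w k (\<beta> k) x \<partial>M)))"
    unfolding l r by (simp add: sum_subtractf right_diff_distrib)
  also have "norm \<dots> \<le> (\<Sum>\<beta>\<in>PiE K A. norm ((\<Prod>k\<in>K. cc k (\<beta> k)) * ((\<integral>x. (\<Prod>k\<in>K. w k (\<beta> k) x) \<partial>M) - (\<Prod>k\<in>K. \<integral>x. w k (\<beta> k) x \<partial>M))))"
    by (rule norm_sum)
  also have "\<dots> = (\<Sum>\<beta>\<in>PiE K A. (\<Prod>k\<in>K. norm (cc k (\<beta> k))) * norm ((\<integral>x. (\<Prod>k\<in>K. w k (\<beta> k) x) \<partial>M) - (\<Prod>k\<in>K. \<integral>x. w k (\<beta> k) x \<partial>M)))"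
    by (simp add: norm_mult prod_norm)
  finally show ?thesis .
qed

lemma decouple_rk:
  fixes U :: "'i \<Rightarrow> 'a \<Rightarrow> complex" and rk :: "'i \<Rightarrow> nat"
  assumes M: "prob_space M" and I: "finite I" and rk: "inj_on rk I"
    and Pre: "\<And>i. i \<in> I \<Longrightarrow> subalgebra M (Pre i)"
    and Post: "\<And>i. i \<in> I \<Longrightarrow> subalgebra M (Post i)"
    and alpha: "\<And>i A B. i \<in> I \<Longrightarrow> A \<in> sets (Pre i) \<Longrightarrow> B \<in> sets (Post i) \<Longrightarrow>
                   \<bar>measure M (A \<inter> B) - measure M A * measure M B\<bar> \<le> a"
    and Um: "\<And>i. i \<in> I \<Longrightarrow> U i \<in> borel_measurable (Pre i)"
    and Upost: "\<And>i i'. i \<in> I \<Longrightarrow> i' \<in> I \<Longrightarrow> rk i < rk i' \<Longrightarrow> U i' \<in> borel_measurable (Post i)"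
    and Ub: "\<And>i x. i \<in> I \<Longrightarrow> x \<in> space M \<Longrightarrow> norm (U i x) \<le> Bd i"
  shows "norm ((\<integral>x. (\<Prod>i\<in>I. U i x) \<partial>M) - (\<Prod>i\<in>I. (\<integral>x. U i x \<partial>M))) \<le> 16 * a * card I * (\<Prod>i\<in>I. Bd i)"
proof -
  define g where "g = the_inv_into I rk"
  have g1: "\<And>i. i \<in> I \<Longrightarrow> g (rk i) = i" unfolding g_def using rk by (simp add: the_inv_into_f_f)
  have g2: "\<And>r. r \<in> rk ` I \<Longrightarrow> g r \<in> I \<and> rk (g r) = r" using g1 by auto
  have D: "norm ((\<integral>x. (\<Prod>r\<in>rk ` I. U (g r) x) \<partial>M) - (\<Prod>r\<in>rk ` I. (\<integral>x. U (g r) x \<partial>M)))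
     \<le> 16 * a * card (rk ` I) * (\<Prod>r\<in>rk ` I. Bd (g r))"
  proof (rule decouple[OF M, where Pre="\<lambda>r. Pre (g r)" and Post="\<lambda>r. Post (g r)"])
    show "finite (rk ` I)" using I by simp
  next
    fix r i' assume "r \<in> rk ` I" "i' \<in> rk ` I" "r < i'"
    then show "U (g i') \<in> borel_measurable (Post (g r))" using g2 by (intro Upost) auto
  next
    fix r A B assume "r \<in> rk ` I" "A \<in> sets (Pre (g r))" "B \<in> sets (Post (g r))"
    then show "\<bar>measure M (A \<inter> B) - measure M A * measure M B\<bar> \<le> a" using g2 alpha by blast
  qed (use g2 Pre Post Um Ub in auto)
  have e: "\<And>f::'i \<Rightarrow> complex. (\<Prod>r\<in>rk ` I. f (g r)) = (\<Prod>i\<in>I. f i)"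
    by (subst prod.reindex[OF rk]) (auto simp: g1)
  have e2: "(\<Prod>r\<in>rk ` I. Bd (g r)) = (\<Prod>i\<in>I. Bd i)"
    by (subst prod.reindex[OF rk]) (auto simp: g1)
  have e3: "(\<lambda>x. \<Prod>r\<in>rk ` I. U (g r) x) = (\<lambda>x. \<Prod>i\<in>I. U i x)" by (rule ext) (rule e)
  have e4: "(\<Prod>r\<in>rk ` I. (\<integral>x. U (g r) x \<partial>M)) = (\<Prod>i\<in>I. (\<integral>x. U i x \<partial>M))" by (rule e)
  show ?thesis using D unfolding e3 e4 e2 card_image[OF rk] .
qed


lemma sum_fact_le_exp:
  fixes c :: real assumes "0 \<le> c"
  shows "(\<Sum>b\<le>d. c ^ b / fact b) \<le> exp c"
proof -
  have s: "summable (\<lambda>n. c ^ n / fact n)" using summable_exp[of c] by (simp add: divide_inverse mult.commute)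
  have "(\<Sum>b\<le>d. c ^ b / fact b) \<le> (\<Sum>n. c ^ n / fact n)"
    by (rule sum_le_suminf[OF s]) (use assms in auto)
  also have "\<dots> = exp c" by (simp add: exp_def divide_inverse mult.commute)
  finally show ?thesis .
qed

lemma rank_lex:
  fixes j j' k k' R :: nat
  assumes "k < R" "k' < R"
  shows "j * R + k < j' * R + k' \<longleftrightarrow> (j < j' \<or> (j = j' \<and> k < k'))"
proof -
  have A: "j * R + k < j' * R + k'" if "j < j'"
  proof -
    have "j * R + k < j * R + R" using assms by simp
    also have "\<dots> = Suc j * R" by simp
    also have "\<dots> \<le> j' * R" using that by (intro mult_right_mono) auto
    finally show ?thesis by simp
  qed
  have B: "\<not> j * R + k < j' * R + k'" if "j' < j"
  proof -
    have "j' * R + k' < j' * R + R" using assms by simp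
    also have "\<dots> = Suc j' * R" by simp
    also have "\<dots> \<le> j * R" using that by (intro mult_right_mono) auto
    finally show ?thesis by simp
  qed
  show ?thesis using A B by (cases "j < j'"; cases "j' < j") auto
qed


lemma dec_blocks:
  fixes W :: "nat \<Rightarrow> nat \<Rightarrow> 'a \<Rightarrow> complex"
  assumes M: "prob_space M" and J: "finite J" and K: "finite K" and a0: "0 \<le> a"
    and Pre: "\<And>j k. j \<in> J \<Longrightarrow> k \<in> K \<Longrightarrow> subalgebra M (Pre j k)"
    and Post: "\<And>j k. j \<in> J \<Longrightarrow> k \<in> K \<Longrightarrow> subalgebra M (Post j k)"
    and alpha: "\<And>j k A B. j \<in> J \<Longrightarrow> k \<in> K \<Longrightarrow> A \<in> sets (Pre j k) \<Longrightarrow> B \<in> sets (Post j k) \<Longrightarrow>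
                   \<bar>measure M (A \<inter> B) - measure M A * measure M B\<bar> \<le> a"
    and Wm: "\<And>j k. j \<in> J \<Longrightarrow> k \<in> K \<Longrightarrow> W j k \<in> borel_measurable (Pre j k)"
    and Wpost: "\<And>j k j' k'. j \<in> J \<Longrightarrow> k \<in> K \<Longrightarrow> j' \<in> J \<Longrightarrow> k' \<in> K \<Longrightarrow> (j < j' \<or> (j = j' \<and> k < k')) \<Longrightarrow>
                   W j' k' \<in> borel_measurable (Post j k)"
    and Wb: "\<And>j k x. j \<in> J \<Longrightarrow> k \<in> K \<Longrightarrow> x \<in> space M \<Longrightarrow> norm (W j k x) \<le> bd j k"
    and bd1: "\<And>j k. j \<in> J \<Longrightarrow> k \<in> K \<Longrightarrow> 1 \<le> bd j k"
  shows "norm ((\<integral>x. (\<Prod>k\<in>K. \<Prod>j\<in>J. W j k x) \<partial>M) - (\<Prod>k\<in>K. \<integral>x. (\<Prod>j\<in>J. W j k x) \<partial>M))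
     \<le> 32 * a * card J * card K * (\<Prod>k\<in>K. \<Prod>j\<in>J. bd j k)^2"
proof -
  interpret prob_space M by (rule M)
  define R where "R = Suc (Max (insert 0 K))"
  have kR: "\<And>k. k \<in> K \<Longrightarrow> k < R" unfolding R_def using K by (simp add: le_imp_less_Suc)
  define rk where "rk = (\<lambda>(j::nat, k::nat). j * R + k)"
  have rk_less: "rk (j, k) < rk (j', k') \<longleftrightarrow> (j < j' \<or> (j = j' \<and> k < k'))" if "k \<in> K" "k' \<in> K" for j k j' k'
    unfolding rk_def using rank_lex[OF kR[OF that(1)] kR[OF that(2)]] by simp
  have rk_inj: "inj_on rk (J \<times> K)"
  proof (rule inj_onI)
    fix p p' assume "p \<in> J \<times> K" "p' \<in> J \<times> K" "rk p = rk p'"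
    then obtain j k j' k' where "p = (j, k)" "p' = (j', k')" "k \<in> K" "k' \<in> K" "rk (j,k) = rk (j',k')" by auto
    moreover have "\<not> rk (j, k) < rk (j', k')" "\<not> rk (j', k') < rk (j, k)" using calculation by auto
    ultimately show "p = p'" using rk_less by (metis linorder_neqE_nat)
  qed
  define Bk where "Bk = (\<lambda>k. \<Prod>j\<in>J. bd j k)"
  have Bk1: "\<And>k. k \<in> K \<Longrightarrow> 1 \<le> Bk k" unfolding Bk_def using bd1 by (intro prod_ge_1) auto
  define P where "P = (\<Prod>k\<in>K. Bk k)"
  have P1: "1 \<le> P" unfolding P_def using Bk1 by (intro prod_ge_1) auto
  have BkP: "\<And>k. k \<in> K \<Longrightarrow> Bk k \<le> P"
  proof -
    fix k assume k: "k \<in> K"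
    have "P = Bk k * (\<Prod>k'\<in>K - {k}. Bk k')" unfolding P_def using k K by (simp add: prod.remove)
    moreover have "1 \<le> (\<Prod>k'\<in>K - {k}. Bk k')" using Bk1 by (intro prod_ge_1) auto
    ultimately show "Bk k \<le> P" using Bk1[OF k] by (metis mult_le_cancel_left1 order.trans zero_le_one linorder_not_le less_le_not_le)
  qed
  have glob: "norm ((\<integral>x. (\<Prod>p\<in>J \<times> K. W (fst p) (snd p) x) \<partial>M) - (\<Prod>p\<in>J \<times> K. (\<integral>x. W (fst p) (snd p) x \<partial>M)))
     \<le> 16 * a * card (J \<times> K) * (\<Prod>p\<in>J \<times> K. bd (fst p) (snd p))"
  proof (rule decouple_rk[OF M _ rk_inj, where Pre="\<lambda>p. Pre (fst p) (snd p)" and Post="\<lambda>p. Post (fst p) (snd p)"])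
    fix p p' assume h: "p \<in> J \<times> K" "p' \<in> J \<times> K" "rk p < rk p'"
    obtain j k j' k' where pp: "p = (j, k)" "p' = (j', k')" by (cases p, cases p') auto
    have "j < j' \<or> (j = j' \<and> k < k')" using h rk_less[of k k' j j'] unfolding pp by auto
    then show "W (fst p') (snd p') \<in> borel_measurable (Post (fst p) (snd p))"
      using h unfolding pp by (intro Wpost) auto
  qed (use J K Pre Post alpha Wm Wb in \<open>auto simp: mem_Times_iff\<close>)
  have sw: "\<And>f :: nat \<Rightarrow> nat \<Rightarrow> 'c::comm_monoid_mult. (\<Prod>k\<in>K. \<Prod>j\<in>J. f j k) = (\<Prod>p\<in>J \<times> K. f (fst p) (snd p))"
    by (subst prod.swap) (simp add: prod.cartesian_product case_prod_beta)
  have glob': "norm ((\<integral>x. (\<Prod>k\<in>K. \<Prod>j\<in>J. W j k x) \<partial>M) - (\<Prod>k\<in>K. \<Prod>j\<in>J. (\<integral>x. W j k x \<partial>M)))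
     \<le> 16 * a * card J * card K * P"
  proof -
    have e1: "(\<lambda>x. \<Prod>k\<in>K. \<Prod>j\<in>J. W j k x) = (\<lambda>x. \<Prod>p\<in>J \<times> K. W (fst p) (snd p) x)" by (rule ext) (rule sw)
    have e2: "(\<Prod>k\<in>K. \<Prod>j\<in>J. (\<integral>x. W j k x \<partial>M)) = (\<Prod>p\<in>J \<times> K. (\<integral>x. W (fst p) (snd p) x \<partial>M))" by (rule sw)
    have e3: "P = (\<Prod>p\<in>J \<times> K. bd (fst p) (snd p))" unfolding P_def Bk_def by (rule sw)
    show ?thesis using glob unfolding e1 e2 e3 card_cartesian_product by (simp add: mult.assoc)
  qed
  have blk: "norm ((\<integral>x. (\<Prod>j\<in>J. W j k x) \<partial>M) - (\<Prod>j\<in>J. (\<integral>x. W j k x \<partial>M))) \<le> 16 * a * card J * Bk k"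
    if k: "k \<in> K" for k
    unfolding Bk_def
  proof (rule decouple[OF M J, where Pre="\<lambda>j. Pre j k" and Post="\<lambda>j. Post j k"])
    fix j j' assume "j \<in> J" "j' \<in> J" "j < j'"
    then show "W j' k \<in> borel_measurable (Post j k)" using k by (intro Wpost) auto
  qed (use k Pre Post alpha Wm Wb in auto)
  have nB: "norm (\<integral>x. (\<Prod>j\<in>J. W j k x) \<partial>M) \<le> Bk k" if k: "k \<in> K" for k
    unfolding Bk_def by (rule norm_integral_le_const[OF M]) (use k Wb in \<open>auto simp: prod_norm[symmetric] intro!: prod_mono\<close>)
  have nC: "norm (\<Prod>j\<in>J. (\<integral>x. W j k x \<partial>M)) \<le> Bk k" if k: "k \<in> K" for k
    unfolding Bk_def prod_norm[symmetric]
    by (intro prod_mono conjI norm_ge_zero norm_integral_le_const[OF M]) (use k Wb in auto)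
  have BC: "norm ((\<Prod>k\<in>K. \<integral>x. (\<Prod>j\<in>J. W j k x) \<partial>M) - (\<Prod>k\<in>K. \<Prod>j\<in>J. (\<integral>x. W j k x \<partial>M)))
     \<le> P * (\<Sum>k\<in>K. norm ((\<integral>x. (\<Prod>j\<in>J. W j k x) \<partial>M) - (\<Prod>j\<in>J. (\<integral>x. W j k x \<partial>M))))"
    unfolding P_def by (rule norm_prod_diff_le[OF K]) (use nB nC Bk1 in auto)
  also have "\<dots> \<le> P * (\<Sum>k\<in>K. 16 * a * card J * P)"
    using P1 blk BkP a0 by (intro mult_left_mono sum_mono order.trans[OF blk] mult_left_mono) auto
  also have "\<dots> = 16 * a * card J * card K * P * P" by (simp add: algebra_simps)
  finally have BC: "norm ((\<Prod>k\<in>K. \<integral>x. (\<Prod>j\<in>J. W j k x) \<partial>M) - (\<Prod>k\<in>K. \<Prod>j\<in>J. (\<integral>x. W j k x \<partial>M)))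
     \<le> 16 * a * card J * card K * P * P" .
  have c0: "0 \<le> 16 * a * card J * card K" using a0 by simp
  have "16 * a * card J * card K * P \<le> 16 * a * card J * card K * P * P"
    using c0 P1 mult_left_mono[OF P1, of "16 * a * card J * card K * P"] by simp
  have "norm ((\<integral>x. (\<Prod>k\<in>K. \<Prod>j\<in>J. W j k x) \<partial>M) - (\<Prod>k\<in>K. \<integral>x. (\<Prod>j\<in>J. W j k x) \<partial>M))
      \<le> norm ((\<integral>x. (\<Prod>k\<in>K. \<Prod>j\<in>J. W j k x) \<partial>M) - (\<Prod>k\<in>K. \<Prod>j\<in>J. (\<integral>x. W j k x \<partial>M)))
        + norm ((\<Prod>k\<in>K. \<integral>x. (\<Prod>j\<in>J. W j k x) \<partial>M) - (\<Prod>k\<in>K. \<Prod>j\<in>J. (\<integral>x. W j k x \<partial>M)))"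
    using norm_triangle_ineq4[of "(\<integral>x. (\<Prod>k\<in>K. \<Prod>j\<in>J. W j k x) \<partial>M) - (\<Prod>k\<in>K. \<Prod>j\<in>J. (\<integral>x. W j k x \<partial>M))"
         "(\<Prod>k\<in>K. \<integral>x. (\<Prod>j\<in>J. W j k x) \<partial>M) - (\<Prod>k\<in>K. \<Prod>j\<in>J. (\<integral>x. W j k x \<partial>M))"] by simp
  also have "\<dots> \<le> 16 * a * card J * card K * P + 16 * a * card J * card K * P * P"
    by (rule add_mono[OF glob' BC])
  also have "\<dots> \<le> 32 * a * card J * card K * P^2"
    using \<open>16 * a * card J * card K * P \<le> 16 * a * card J * card K * P * P\<close> by (simp add: power2_eq_square algebra_simps)
  finally show ?thesis unfolding P_def Bk_def .
qed


lemma exp1: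
  fixes x :: "nat \<Rightarrow> nat \<Rightarrow> real" and s :: real
  assumes G: "finite G" and J: "finite J"
  shows "(\<Prod>n\<in>G. \<Sum>b\<le>d. (\<i> * complex_of_real (s * (\<Prod>j\<in>J. x j n)))^b / fact b)
    = (\<Sum>\<alpha>\<in>PiE G (\<lambda>_. {..d}). (\<Prod>n\<in>G. (\<i> * complex_of_real s)^(\<alpha> n) / fact (\<alpha> n))
         * (\<Prod>j\<in>J. \<Prod>n\<in>G. complex_of_real (x j n)^(\<alpha> n)))"
proof -
  have e: "(\<i> * complex_of_real (s * (\<Prod>j\<in>J. x j n)))^b / fact b
     = ((\<i> * complex_of_real s)^b / fact b) * (\<Prod>j\<in>J. complex_of_real (x j n)^b)" for n b
    by (simp add: power_mult_distrib prod_power_distrib of_real_prod)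
  have "(\<Prod>n\<in>G. \<Sum>b\<le>d. (\<i> * complex_of_real (s * (\<Prod>j\<in>J. x j n)))^b / fact b)
     = (\<Prod>n\<in>G. \<Sum>b\<le>d. ((\<i> * complex_of_real s)^b / fact b) * (\<Prod>j\<in>J. complex_of_real (x j n)^b))"
    unfolding e ..
  also have "\<dots> = (\<Sum>\<alpha>\<in>PiE G (\<lambda>_. {..d}). \<Prod>n\<in>G. ((\<i> * complex_of_real s)^(\<alpha> n) / fact (\<alpha> n)) * (\<Prod>j\<in>J. complex_of_real (x j n)^(\<alpha> n)))"
    by (rule prod_sum_PiE) (use G in auto)
  also have "\<dots> = (\<Sum>\<alpha>\<in>PiE G (\<lambda>_. {..d}). (\<Prod>n\<in>G. (\<i> * complex_of_real s)^(\<alpha> n) / fact (\<alpha> n))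
         * (\<Prod>j\<in>J. \<Prod>n\<in>G. complex_of_real (x j n)^(\<alpha> n)))"
    by (intro sum.cong refl, subst prod.distrib, subst prod.swap[of _ J G], rule refl)
  finally show ?thesis .
qed

lemma exp_bound_sum:
  fixes c :: real assumes c: "0 \<le> c" and G: "finite G"
  shows "(\<Sum>\<alpha>\<in>PiE G (\<lambda>_. {..d}). \<Prod>n\<in>G. c^(\<alpha> n) / fact (\<alpha> n)) \<le> exp c ^ card G"
proof -
  have "(\<Sum>\<alpha>\<in>PiE G (\<lambda>_. {..d}). \<Prod>n\<in>G. c^(\<alpha> n) / fact (\<alpha> n)) = (\<Prod>n\<in>G. \<Sum>b\<le>d. c^b / fact b)"
    by (rule prod_sum_PiE[symmetric]) (use G in auto)
  also have "\<dots> \<le> (\<Prod>n\<in>G. exp c)"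
    by (intro prod_mono conjI sum_nonneg sum_fact_le_exp c) (use c in auto)
  also have "\<dots> = exp c ^ card G" by simp
  finally show ?thesis .
qed

lemma taylor_dec:
  fixes x :: "nat \<Rightarrow> nat \<Rightarrow> 'a \<Rightarrow> real" and s :: real and K J :: "nat set" and G :: "nat \<Rightarrow> nat set"
  assumes M: "prob_space M" and J: "finite J" and K: "finite K" and G: "\<And>k. k \<in> K \<Longrightarrow> finite (G k)"
    and a0: "0 \<le> a" and D1: "1 \<le> D1"
    and xb: "\<And>j n \<omega>. j \<in> J \<Longrightarrow> \<omega> \<in> space M \<Longrightarrow> \<bar>x j n \<omega>\<bar> \<le> D1"
    and Pre: "\<And>j k. j \<in> J \<Longrightarrow> k \<in> K \<Longrightarrow> subalgebra M (Pre j k)"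
    and Post: "\<And>j k. j \<in> J \<Longrightarrow> k \<in> K \<Longrightarrow> subalgebra M (Post j k)"
    and alpha: "\<And>j k A B. j \<in> J \<Longrightarrow> k \<in> K \<Longrightarrow> A \<in> sets (Pre j k) \<Longrightarrow> B \<in> sets (Post j k) \<Longrightarrow>
                   \<bar>measure M (A \<inter> B) - measure M A * measure M B\<bar> \<le> a"
    and xPre: "\<And>j k n. j \<in> J \<Longrightarrow> k \<in> K \<Longrightarrow> n \<in> G k \<Longrightarrow> x j n \<in> borel_measurable (Pre j k)"
    and xPost: "\<And>j k j' k' n. j \<in> J \<Longrightarrow> k \<in> K \<Longrightarrow> j' \<in> J \<Longrightarrow> k' \<in> K \<Longrightarrow> (j < j' \<or> (j = j' \<and> k < k')) \<Longrightarrow>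
                   n \<in> G k' \<Longrightarrow> x j' n \<in> borel_measurable (Post j k)"
  shows "norm ((\<integral>\<omega>. (\<Prod>k\<in>K. \<Prod>n\<in>G k. \<Sum>b\<le>d. (\<i> * complex_of_real (s * (\<Prod>j\<in>J. x j n \<omega>)))^b / fact b) \<partial>M)
      - (\<Prod>k\<in>K. \<integral>\<omega>. (\<Prod>n\<in>G k. \<Sum>b\<le>d. (\<i> * complex_of_real (s * (\<Prod>j\<in>J. x j n \<omega>)))^b / fact b) \<partial>M))
    \<le> 32 * a * card J * card K * exp (\<bar>s\<bar> * D1^(2 * card J)) ^ (\<Sum>k\<in>K. card (G k))"
proof -
  interpret prob_space M by (rule M)
  define A where "A = (\<lambda>k. PiE (G k) (\<lambda>_::nat. {..d}))"
  define cc where "cc = (\<lambda>k (\<alpha>::nat\<Rightarrow>nat). \<Prod>n\<in>G k. (\<i> * complex_of_real s)^(\<alpha> n) / fact (\<alpha> n))"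
  define Wf where "Wf = (\<lambda>j k (\<alpha>::nat\<Rightarrow>nat) \<omega>. \<Prod>n\<in>G k. complex_of_real (x j n \<omega>)^(\<alpha> n))"
  define w where "w = (\<lambda>k \<alpha> \<omega>. \<Prod>j\<in>J. Wf j k \<alpha> \<omega>)"
  define bd where "bd = (\<lambda>k (\<alpha>::nat\<Rightarrow>nat). \<Prod>n\<in>G k. D1^(\<alpha> n))"
  have bd1: "1 \<le> bd k \<alpha>" for k \<alpha> unfolding bd_def using D1 by (intro prod_ge_1 one_le_power) auto
  have Wfm: "Wf j k \<alpha> \<in> borel_measurable (Pre j k)" if "j \<in> J" "k \<in> K" for j k \<alpha>
    unfolding Wf_def using that xPre by (intro borel_measurable_prod borel_measurable_power borel_measurable_of_real) auto
  have WfM: "Wf j k \<alpha> \<in> borel_measurable M" if "j \<in> J" "k \<in> K" for j k \<alpha>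
    by (rule measurable_from_subalg[OF Pre[OF that] Wfm[OF that]])
  have Wfb: "norm (Wf j k \<alpha> \<omega>) \<le> bd k \<alpha>" if "j \<in> J" "\<omega> \<in> space M" for j k \<alpha> \<omega>
    unfolding Wf_def bd_def prod_norm[symmetric] norm_power
    using xb[OF that] by (intro prod_mono conjI power_mono) auto
  have eq: "(\<Prod>n\<in>G k. \<Sum>b\<le>d. (\<i> * complex_of_real (s * (\<Prod>j\<in>J. x j n \<omega>)))^b / fact b)
      = (\<Sum>\<alpha>\<in>A k. cc k \<alpha> * w k \<alpha> \<omega>)" if "k \<in> K" for k \<omega>
    unfolding A_def cc_def w_def Wf_def using exp1[OF G[OF that] J, where x="\<lambda>j n. x j n \<omega>" and s=s and d=d] by simp
  have eqL: "(\<lambda>\<omega>. \<Prod>k\<in>K. \<Prod>n\<in>G k. \<Sum>b\<le>d. (\<i> * complex_of_real (s * (\<Prod>j\<in>J. x j n \<omega>)))^b / fact b)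
      = (\<lambda>\<omega>. \<Prod>k\<in>K. \<Sum>\<alpha>\<in>A k. cc k \<alpha> * w k \<alpha> \<omega>)"
    using eq by (intro ext prod.cong refl) auto
  have eqR: "(\<Prod>k\<in>K. \<integral>\<omega>. (\<Prod>n\<in>G k. \<Sum>b\<le>d. (\<i> * complex_of_real (s * (\<Prod>j\<in>J. x j n \<omega>)))^b / fact b) \<partial>M)
      = (\<Prod>k\<in>K. \<integral>\<omega>. (\<Sum>\<alpha>\<in>A k. cc k \<alpha> * w k \<alpha> \<omega>) \<partial>M)"
  proof (rule prod.cong[OF refl])
    fix k assume "k \<in> K"
    then have "(\<lambda>\<omega>. \<Prod>n\<in>G k. \<Sum>b\<le>d. (\<i> * complex_of_real (s * (\<Prod>j\<in>J. x j n \<omega>)))^b / fact b)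
      = (\<lambda>\<omega>. \<Sum>\<alpha>\<in>A k. cc k \<alpha> * w k \<alpha> \<omega>)" using eq by auto
    then show "(\<integral>\<omega>. (\<Prod>n\<in>G k. \<Sum>b\<le>d. (\<i> * complex_of_real (s * (\<Prod>j\<in>J. x j n \<omega>)))^b / fact b) \<partial>M)
      = (\<integral>\<omega>. (\<Sum>\<alpha>\<in>A k. cc k \<alpha> * w k \<alpha> \<omega>) \<partial>M)" by simp
  qed
  have step1: "norm ((\<integral>\<omega>. (\<Prod>k\<in>K. \<Sum>\<alpha>\<in>A k. cc k \<alpha> * w k \<alpha> \<omega>) \<partial>M) - (\<Prod>k\<in>K. \<integral>\<omega>. (\<Sum>\<alpha>\<in>A k. cc k \<alpha> * w k \<alpha> \<omega>) \<partial>M))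
    \<le> (\<Sum>\<beta>\<in>PiE K A. (\<Prod>k\<in>K. norm (cc k (\<beta> k))) * norm ((\<integral>\<omega>. (\<Prod>k\<in>K. w k (\<beta> k) \<omega>) \<partial>M) - (\<Prod>k\<in>K. \<integral>\<omega>. w k (\<beta> k) \<omega> \<partial>M)))"
  proof (rule expand_dec[OF M K, where Bw="\<lambda>k \<alpha>. \<Prod>j\<in>J. bd k \<alpha>"])
    show "\<And>k. k \<in> K \<Longrightarrow> finite (A k)" unfolding A_def using G by (auto intro: finite_PiE)
    show "\<And>k a. k \<in> K \<Longrightarrow> a \<in> A k \<Longrightarrow> w k a \<in> borel_measurable M"
      unfolding w_def by (intro borel_measurable_prod WfM) auto
    show "\<And>k a \<omega>. k \<in> K \<Longrightarrow> a \<in> A k \<Longrightarrow> \<omega> \<in> space M \<Longrightarrow> norm (w k a \<omega>) \<le> (\<Prod>j\<in>J. bd k a)"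
      unfolding w_def prod_norm[symmetric] using Wfb by (intro prod_mono) auto
  qed
  have step2: "norm ((\<integral>\<omega>. (\<Prod>k\<in>K. w k (\<beta> k) \<omega>) \<partial>M) - (\<Prod>k\<in>K. \<integral>\<omega>. w k (\<beta> k) \<omega> \<partial>M))
      \<le> 32 * a * card J * card K * (\<Prod>k\<in>K. \<Prod>j\<in>J. bd k (\<beta> k))^2" for \<beta>
    unfolding w_def
  proof (rule dec_blocks[OF M J K a0 Pre Post alpha, where W="\<lambda>j k. Wf j k (\<beta> k)" and bd="\<lambda>j k. bd k (\<beta> k)"])
    show "\<And>j k. j \<in> J \<Longrightarrow> k \<in> K \<Longrightarrow> Wf j k (\<beta> k) \<in> borel_measurable (Pre j k)" by (rule Wfm)
    fix j k j' k' assume h: "j \<in> J" "k \<in> K" "j' \<in> J" "k' \<in> K" "j < j' \<or> j = j' \<and> k < k'"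
    show "Wf j' k' (\<beta> k') \<in> borel_measurable (Post j k)"
      unfolding Wf_def using xPost[OF h] by (intro borel_measurable_prod borel_measurable_power borel_measurable_of_real) auto
  qed (use Wfb bd1 in auto)
  define c where "c = \<bar>s\<bar> * D1^(2 * card J)"
  have c0: "0 \<le> c" unfolding c_def using D1 by simp
  have trm: "norm (cc k \<alpha>) * (\<Prod>j\<in>J. bd k \<alpha>)^2 = (\<Prod>n\<in>G k. c^(\<alpha> n) / fact (\<alpha> n))" if "k \<in> K" for k \<alpha>
  proof -
    have "(\<Prod>j\<in>J. bd k \<alpha>)^2 = (\<Prod>n\<in>G k. (D1^(2 * card J))^(\<alpha> n))"
    proof -
      have "(\<Prod>j\<in>J. bd k \<alpha>)^2 = (\<Prod>n\<in>G k. D1^(\<alpha> n)) ^ (card J * 2)"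
        unfolding bd_def by (simp add: power_mult)
      also have "\<dots> = (\<Prod>n\<in>G k. (D1^(\<alpha> n)) ^ (card J * 2))" by (rule prod_power_distrib)
      also have "\<dots> = (\<Prod>n\<in>G k. (D1^(2 * card J))^(\<alpha> n))"
        by (intro prod.cong refl) (simp add: power_mult[symmetric] mult.commute)
      finally show ?thesis .
    qed
    moreover have "norm (cc k \<alpha>) = (\<Prod>n\<in>G k. \<bar>s\<bar>^(\<alpha> n) / fact (\<alpha> n))"
      unfolding cc_def prod_norm[symmetric] by (simp add: norm_divide norm_power norm_mult)
    ultimately show ?thesis unfolding c_def by (simp add: prod.distrib[symmetric] power_mult_distrib)
  qed
  have "(\<Sum>\<beta>\<in>PiE K A. (\<Prod>k\<in>K. norm (cc k (\<beta> k))) * norm ((\<integral>\<omega>. (\<Prod>k\<in>K. w k (\<beta> k) \<omega>) \<partial>M) - (\<Prod>k\<in>K. \<integral>\<omega>. w k (\<beta> k) \<omega> \<partial>M)))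
      \<le> (\<Sum>\<beta>\<in>PiE K A. (\<Prod>k\<in>K. norm (cc k (\<beta> k))) * (32 * a * card J * card K * (\<Prod>k\<in>K. \<Prod>j\<in>J. bd k (\<beta> k))^2))"
    by (intro sum_mono mult_left_mono step2 prod_nonneg) auto
  also have "\<dots> = 32 * a * card J * card K * (\<Sum>\<beta>\<in>PiE K A. \<Prod>k\<in>K. norm (cc k (\<beta> k)) * (\<Prod>j\<in>J. bd k (\<beta> k))^2)"
    by (simp add: sum_distrib_left prod.distrib prod_power_distrib algebra_simps)
  also have "(\<Sum>\<beta>\<in>PiE K A. \<Prod>k\<in>K. norm (cc k (\<beta> k)) * (\<Prod>j\<in>J. bd k (\<beta> k))^2)
      = (\<Prod>k\<in>K. \<Sum>\<alpha>\<in>A k. norm (cc k \<alpha>) * (\<Prod>j\<in>J. bd k \<alpha>)^2)"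
    by (rule prod_sum_PiE[symmetric]) (use K G in \<open>auto simp: A_def intro: finite_PiE\<close>)
  also have "\<dots> \<le> (\<Prod>k\<in>K. exp c ^ card (G k))"
  proof (rule prod_mono, rule conjI)
    fix k assume k: "k \<in> K"
    show "0 \<le> (\<Sum>\<alpha>\<in>A k. norm (cc k \<alpha>) * (\<Prod>j\<in>J. bd k \<alpha>)^2)" by (intro sum_nonneg) auto
    have "(\<Sum>\<alpha>\<in>A k. norm (cc k \<alpha>) * (\<Prod>j\<in>J. bd k \<alpha>)^2) = (\<Sum>\<alpha>\<in>A k. \<Prod>n\<in>G k. c^(\<alpha> n) / fact (\<alpha> n))"
      using trm[OF k] by simp
    also have "\<dots> \<le> exp c ^ card (G k)" unfolding A_def by (rule exp_bound_sum[OF c0 G[OF k]])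
    finally show "(\<Sum>\<alpha>\<in>A k. norm (cc k \<alpha>) * (\<Prod>j\<in>J. bd k \<alpha>)^2) \<le> exp c ^ card (G k)" .
  qed
  also have "(\<Prod>k\<in>K. exp c ^ card (G k)) = exp c ^ (\<Sum>k\<in>K. card (G k))" by (simp add: power_sum)
  finally have fin: "(\<Sum>\<beta>\<in>PiE K A. (\<Prod>k\<in>K. norm (cc k (\<beta> k))) * norm ((\<integral>\<omega>. (\<Prod>k\<in>K. w k (\<beta> k) \<omega>) \<partial>M) - (\<Prod>k\<in>K. \<integral>\<omega>. w k (\<beta> k) \<omega> \<partial>M)))
      \<le> 32 * a * card J * card K * exp c ^ (\<Sum>k\<in>K. card (G k))"
    using a0 by (simp add: mult_left_mono)
  show ?thesis unfolding eqL eqR using order.trans[OF step1 fin] unfolding c_def .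
qed


lemma swap_approx:
  fixes \<Phi> \<Psi> :: "nat \<Rightarrow> 'a \<Rightarrow> complex"
  assumes M: "prob_space M" and K: "finite K"
    and m1: "\<And>k. k \<in> K \<Longrightarrow> \<Phi> k \<in> borel_measurable M" and m2: "\<And>k. k \<in> K \<Longrightarrow> \<Psi> k \<in> borel_measurable M"
    and b1: "\<And>k \<omega>. k \<in> K \<Longrightarrow> \<omega> \<in> space M \<Longrightarrow> norm (\<Phi> k \<omega>) \<le> B k"
    and b2: "\<And>k \<omega>. k \<in> K \<Longrightarrow> \<omega> \<in> space M \<Longrightarrow> norm (\<Psi> k \<omega>) \<le> B k"
    and B1: "\<And>k. k \<in> K \<Longrightarrow> 1 \<le> B k"
  shows "norm ((\<integral>\<omega>. (\<Prod>k\<in>K. \<Phi> k \<omega>) \<partial>M) - (\<Prod>k\<in>K. \<integral>\<omega>. \<Phi> k \<omega> \<partial>M))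
     \<le> norm ((\<integral>\<omega>. (\<Prod>k\<in>K. \<Psi> k \<omega>) \<partial>M) - (\<Prod>k\<in>K. \<integral>\<omega>. \<Psi> k \<omega> \<partial>M))
       + 2 * (\<Prod>k\<in>K. B k) * (\<Sum>k\<in>K. \<integral>\<omega>. norm (\<Phi> k \<omega> - \<Psi> k \<omega>) \<partial>M)"
proof -
  interpret prob_space M by (rule M)
  have i1: "integrable M (\<Phi> k)" if "k \<in> K" for k
    by (rule integrable_bounded_pm[OF M m1 b1]) (use that in auto)
  have i2: "integrable M (\<Psi> k)" if "k \<in> K" for k
    by (rule integrable_bounded_pm[OF M m2 b2]) (use that in auto)
  have iP1: "integrable M (\<lambda>\<omega>. \<Prod>k\<in>K. \<Phi> k \<omega>)"
    by (rule integrable_bounded_pm[OF M, where B="\<Prod>k\<in>K. B k"])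
       (use m1 b1 in \<open>auto intro!: borel_measurable_prod prod_mono simp: prod_norm[symmetric]\<close>)
  have iP2: "integrable M (\<lambda>\<omega>. \<Prod>k\<in>K. \<Psi> k \<omega>)"
    by (rule integrable_bounded_pm[OF M, where B="\<Prod>k\<in>K. B k"])
       (use m2 b2 in \<open>auto intro!: borel_measurable_prod prod_mono simp: prod_norm[symmetric]\<close>)
  have id: "integrable M (\<lambda>\<omega>. norm (\<Phi> k \<omega> - \<Psi> k \<omega>))" if "k \<in> K" for k
    using i1[OF that] i2[OF that] by auto
  have PB: "0 \<le> (\<Prod>k\<in>K. B k)" using B1 by (intro prod_nonneg) (auto intro: order.trans[OF zero_le_one])
  have d1: "norm ((\<integral>\<omega>. (\<Prod>k\<in>K. \<Phi> k \<omega>) \<partial>M) - (\<integral>\<omega>. (\<Prod>k\<in>K. \<Psi> k \<omega>) \<partial>M))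
      \<le> (\<Prod>k\<in>K. B k) * (\<Sum>k\<in>K. \<integral>\<omega>. norm (\<Phi> k \<omega> - \<Psi> k \<omega>) \<partial>M)"
  proof -
    have "norm ((\<integral>\<omega>. (\<Prod>k\<in>K. \<Phi> k \<omega>) \<partial>M) - (\<integral>\<omega>. (\<Prod>k\<in>K. \<Psi> k \<omega>) \<partial>M))
        = norm (\<integral>\<omega>. (\<Prod>k\<in>K. \<Phi> k \<omega>) - (\<Prod>k\<in>K. \<Psi> k \<omega>) \<partial>M)" using iP1 iP2 by simp
    also have "\<dots> \<le> (\<integral>\<omega>. norm ((\<Prod>k\<in>K. \<Phi> k \<omega>) - (\<Prod>k\<in>K. \<Psi> k \<omega>)) \<partial>M)" by (rule integral_norm_bound)
    also have "\<dots> \<le> (\<integral>\<omega>. (\<Prod>k\<in>K. B k) * (\<Sum>k\<in>K. norm (\<Phi> k \<omega> - \<Psi> k \<omega>)) \<partial>M)"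
    proof (rule integral_mono)
      show "integrable M (\<lambda>\<omega>. norm ((\<Prod>k\<in>K. \<Phi> k \<omega>) - (\<Prod>k\<in>K. \<Psi> k \<omega>)))" using iP1 iP2 by auto
      show "integrable M (\<lambda>\<omega>. (\<Prod>k\<in>K. B k) * (\<Sum>k\<in>K. norm (\<Phi> k \<omega> - \<Psi> k \<omega>)))"
        using id by (intro integrable_mult_right integrable_sum) auto
      fix \<omega> assume "\<omega> \<in> space M"
      then show "norm ((\<Prod>k\<in>K. \<Phi> k \<omega>) - (\<Prod>k\<in>K. \<Psi> k \<omega>)) \<le> (\<Prod>k\<in>K. B k) * (\<Sum>k\<in>K. norm (\<Phi> k \<omega> - \<Psi> k \<omega>))"
        by (intro norm_prod_diff_le K) (use b1 b2 B1 in auto)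
    qed
    also have "\<dots> = (\<Prod>k\<in>K. B k) * (\<Sum>k\<in>K. \<integral>\<omega>. norm (\<Phi> k \<omega> - \<Psi> k \<omega>) \<partial>M)"
      using id by (simp add: Bochner_Integration.integral_sum)
    finally show ?thesis .
  qed
  have d2: "norm ((\<Prod>k\<in>K. \<integral>\<omega>. \<Phi> k \<omega> \<partial>M) - (\<Prod>k\<in>K. \<integral>\<omega>. \<Psi> k \<omega> \<partial>M))
      \<le> (\<Prod>k\<in>K. B k) * (\<Sum>k\<in>K. \<integral>\<omega>. norm (\<Phi> k \<omega> - \<Psi> k \<omega>) \<partial>M)"
  proof -
    have "norm ((\<Prod>k\<in>K. \<integral>\<omega>. \<Phi> k \<omega> \<partial>M) - (\<Prod>k\<in>K. \<integral>\<omega>. \<Psi> k \<omega> \<partial>M))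
       \<le> (\<Prod>k\<in>K. B k) * (\<Sum>k\<in>K. norm ((\<integral>\<omega>. \<Phi> k \<omega> \<partial>M) - (\<integral>\<omega>. \<Psi> k \<omega> \<partial>M)))"
      by (intro norm_prod_diff_le K norm_integral_le_const[OF M]) (use b1 b2 B1 in auto)
    also have "\<dots> \<le> (\<Prod>k\<in>K. B k) * (\<Sum>k\<in>K. \<integral>\<omega>. norm (\<Phi> k \<omega> - \<Psi> k \<omega>) \<partial>M)"
    proof (intro mult_left_mono sum_mono PB)
      fix k assume k: "k \<in> K"
      have "norm ((\<integral>\<omega>. \<Phi> k \<omega> \<partial>M) - (\<integral>\<omega>. \<Psi> k \<omega> \<partial>M)) = norm (\<integral>\<omega>. \<Phi> k \<omega> - \<Psi> k \<omega> \<partial>M)"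
        using i1[OF k] i2[OF k] by simp
      also have "\<dots> \<le> (\<integral>\<omega>. norm (\<Phi> k \<omega> - \<Psi> k \<omega>) \<partial>M)" by (rule integral_norm_bound)
      finally show "norm ((\<integral>\<omega>. \<Phi> k \<omega> \<partial>M) - (\<integral>\<omega>. \<Psi> k \<omega> \<partial>M)) \<le> (\<integral>\<omega>. norm (\<Phi> k \<omega> - \<Psi> k \<omega>) \<partial>M)" .
    qed
    finally show ?thesis .
  qed
  let ?a = "(\<integral>\<omega>. (\<Prod>k\<in>K. \<Phi> k \<omega>) \<partial>M)" and ?b = "(\<Prod>k\<in>K. \<integral>\<omega>. \<Phi> k \<omega> \<partial>M)"
  let ?c = "(\<integral>\<omega>. (\<Prod>k\<in>K. \<Psi> k \<omega>) \<partial>M)" and ?d = "(\<Prod>k\<in>K. \<integral>\<omega>. \<Psi> k \<omega> \<partial>M)"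
  have "norm (?a - ?b) \<le> norm (?c - ?d) + norm (?a - ?c) + norm (?b - ?d)"
    using norm_triangle_ineq[of "?c - ?d" "(?a - ?c) - (?b - ?d)"] norm_triangle_ineq4[of "?a - ?c" "?b - ?d"]
    by (simp add: algebra_simps)
  then show ?thesis using d1 d2 by simp
qed

lemma iexp_diff_le: "cmod (exp (\<i> * complex_of_real a) - exp (\<i> * complex_of_real b)) \<le> \<bar>a - b\<bar>"
proof -
  have "exp (\<i> * complex_of_real a) - exp (\<i> * complex_of_real b)
      = exp (\<i> * complex_of_real b) * (exp (\<i> * complex_of_real (a - b)) - 1)"
    by (simp add: algebra_simps flip: exp_add)
  also have "cmod \<dots> = cmod (exp (\<i> * complex_of_real (a - b)) - 1)"
    by (simp add: norm_mult)
  also have "\<dots> \<le> \<bar>a - b\<bar>" using iexp_approx1[of "a - b" 0] by simp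
  finally show ?thesis .
qed

lemma taylor_norm_le: "norm (\<Sum>b\<le>d. (\<i> * complex_of_real x)^b / fact b) \<le> exp \<bar>x\<bar>"
proof -
  have "norm (\<Sum>b\<le>d. (\<i> * complex_of_real x)^b / fact b) \<le> (\<Sum>b\<le>d. norm ((\<i> * complex_of_real x)^b / fact b))"
    by (rule norm_sum)
  also have "\<dots> = (\<Sum>b\<le>d. \<bar>x\<bar>^b / fact b)" by (simp add: norm_divide norm_power norm_mult)
  also have "\<dots> \<le> exp \<bar>x\<bar>" by (rule sum_fact_le_exp) simp
  finally show ?thesis .
qed

lemma meas_mono_sub:
  assumes "subalgebra M F1" "subalgebra M F2" "sets F1 \<subseteq> sets F2" "f \<in> borel_measurable F1"
  shows "f \<in> borel_measurable F2"
proof (rule measurable_from_subalg[OF _ assms(4)])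
  show "subalgebra F2 F1" using assms(1-3) by (auto simp: subalgebra_def)
qed


lemma main_bound:
  fixes M :: "'a measure" and X :: "nat \<Rightarrow> nat \<Rightarrow> 'a \<Rightarrow> real" and F :: "ereal \<Rightarrow> ereal \<Rightarrow> 'a measure"
    and q :: "nat \<Rightarrow> nat \<Rightarrow> nat" and \<Gamma> :: "nat \<Rightarrow> nat set" and lo hi :: "nat \<Rightarrow> nat \<Rightarrow> nat"
    and s D aa bb :: real and l m h g d :: nat
  assumes M: "prob_space M" and l1: "l \<ge> 1"
    and Xm: "\<And>j n. j \<in> {1..l} \<Longrightarrow> X j n \<in> borel_measurable M"
    and bnd: "\<And>j n. j \<in> {1..l} \<Longrightarrow> AE \<omega> in M. \<bar>X j n \<omega>\<bar> \<le> D"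
    and subalg: "\<And>k l'. subalgebra M (F k l')"
    and mono: "\<And>k l' k' l''. k' \<le> k \<Longrightarrow> l' \<le> l'' \<Longrightarrow> sets (F k l') \<subseteq> sets (F k' l'')"
    and alph: "\<And>k A B. A \<in> sets (F (-\<infinity>) (ereal (real k))) \<Longrightarrow> B \<in> sets (F (ereal (real (k + g))) \<infinity>) \<Longrightarrow>
                 \<bar>measure M (A \<inter> B) - measure M A * measure M B\<bar> \<le> aa"
    and bet: "\<And>j n. j \<in> {1..l} \<Longrightarrow>
       (\<integral>\<omega>. \<bar>X j n \<omega> - real_cond_exp M (F (ereal (real n - real h)) (ereal (real n + real h))) (X j n) \<omega>\<bar> \<partial>M) \<le> bb"
    and \<Gamma>fin: "\<And>k. finite (\<Gamma> k)"
    and geo1: "\<And>j k n. j \<in> {1..l} \<Longrightarrow> k \<in> {1..m} \<Longrightarrow> n \<in> \<Gamma> k \<Longrightarrow> lo j k \<le> q j n \<and> q j n \<le> hi j k"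
    and geo2: "\<And>j k j' k'. j \<in> {1..l} \<Longrightarrow> j' \<in> {1..l} \<Longrightarrow> k \<in> {1..m} \<Longrightarrow> k' \<in> {1..m} \<Longrightarrow>
                 (j < j' \<or> (j = j' \<and> k < k')) \<Longrightarrow> real (hi j k + h + g) \<le> real (lo j' k') - real h"
    and aa0: "0 \<le> aa"
  shows "cmod ((\<integral>\<omega>. (\<Prod>k=1..m. \<Prod>n\<in>\<Gamma> k. exp (\<i> * complex_of_real (s * (\<Prod>j=1..l. X j (q j n) \<omega>)))) \<partial>M)
           - (\<Prod>k=1..m. \<integral>\<omega>. (\<Prod>n\<in>\<Gamma> k. exp (\<i> * complex_of_real (s * (\<Prod>j=1..l. X j (q j n) \<omega>)))) \<partial>M))
    \<le> 2 * ((\<Sum>k=1..m. card (\<Gamma> k)) * (\<bar>s\<bar> * (max 1 D)^l * l * bb))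
      + 2 * exp (\<bar>s\<bar> * (max 1 D)^l) ^ (2 * (\<Sum>k=1..m. card (\<Gamma> k))) * (\<Sum>k=1..m. card (\<Gamma> k))
           * ((\<bar>s\<bar> * (max 1 D)^l) ^ Suc d / fact (Suc d))
      + 32 * aa * l * m * exp (\<bar>s\<bar> * (max 1 D)^(2 * l)) ^ (\<Sum>k=1..m. card (\<Gamma> k))"
proof -
  interpret prob_space M by (rule M)
  define D1 where "D1 = max 1 D"
  have D1: "1 \<le> D1" "D \<le> D1" unfolding D1_def by auto
  define c0 where "c0 = \<bar>s\<bar> * D1^l"
  have c0: "0 \<le> c0" unfolding c0_def using D1 by simp
  define S where "S = (\<Sum>k=1..m. card (\<Gamma> k))"
  define Ft where "Ft = (\<lambda>j n. F (ereal (real (q j n) - real h)) (ereal (real (q j n) + real h)))"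
  define xt where "xt = (\<lambda>j n \<omega>. max (- D1) (min D1 (real_cond_exp M (Ft j n) (X j (q j n)) \<omega>)))"
  have xtF: "xt j n \<in> borel_measurable (Ft j n)" for j n
    unfolding xt_def by measurable
  have xtM: "xt j n \<in> borel_measurable M" for j n
    by (rule measurable_from_subalg[OF _ xtF]) (simp add: Ft_def subalg)
  have xtb: "\<bar>xt j n \<omega>\<bar> \<le> D1" for j n \<omega> unfolding xt_def using D1 by auto
  have AEX: "AE \<omega> in M. \<forall>j\<in>{1..l}. \<forall>n. \<bar>X j n \<omega>\<bar> \<le> D1"
  proof -
    have "\<forall>j\<in>{1..l}. AE \<omega> in M. \<forall>n. \<bar>X j n \<omega>\<bar> \<le> D1"
    proof
      fix j assume j: "j \<in> {1..l}"
      have "\<forall>n. AE \<omega> in M. \<bar>X j n \<omega>\<bar> \<le> D1"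
      proof
        fix n show "AE \<omega> in M. \<bar>X j n \<omega>\<bar> \<le> D1"
          using bnd[OF j, of n] by (rule AE_mp) (use D1(2) in auto)
      qed
      then show "AE \<omega> in M. \<forall>n. \<bar>X j n \<omega>\<bar> \<le> D1" by (simp add: AE_all_countable)
    qed
    then show ?thesis by (subst AE_ball_countable) auto
  qed
  have iXd: "integrable M (\<lambda>\<omega>. \<bar>X j (q j n) \<omega> - xt j n \<omega>\<bar>)" if j: "j \<in> {1..l}" for j n
  proof (rule integrable_const_bound[where B="D1 + D1"])
    show "AE \<omega> in M. norm \<bar>X j (q j n) \<omega> - xt j n \<omega>\<bar> \<le> D1 + D1"
      using AEX
    proof (rule AE_mp, intro AE_I2 impI)
      fix \<omega> assume "\<forall>j\<in>{1..l}. \<forall>n. \<bar>X j n \<omega>\<bar> \<le> D1"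
      then have "\<bar>X j (q j n) \<omega>\<bar> \<le> D1" using j by auto
      then show "norm \<bar>X j (q j n) \<omega> - xt j n \<omega>\<bar> \<le> D1 + D1" using xtb[of j n \<omega>] by simp
    qed
    show "(\<lambda>\<omega>. \<bar>X j (q j n) \<omega> - xt j n \<omega>\<bar>) \<in> borel_measurable M" using Xm[OF j] xtM by measurable
  qed
  have xtapp: "(\<integral>\<omega>. \<bar>X j (q j n) \<omega> - xt j n \<omega>\<bar> \<partial>M) \<le> bb" if j: "j \<in> {1..l}" for j n
  proof -
    interpret S: finite_measure_subalgebra M "Ft j n"
      by unfold_locales (simp add: Ft_def subalg)
    define ce where "ce = real_cond_exp M (Ft j n) (X j (q j n))"
    have iX: "integrable M (X j (q j n))"
      by (rule integrable_const_bound[where B=D1]) (use AEX j Xm[OF j] in \<open>auto elim!: AE_mp\<close>)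
    have ice: "integrable M ce" unfolding ce_def using S.real_cond_exp_int(1)[OF iX] .
    have "(\<integral>\<omega>. \<bar>X j (q j n) \<omega> - xt j n \<omega>\<bar> \<partial>M) \<le> (\<integral>\<omega>. \<bar>X j (q j n) \<omega> - ce \<omega>\<bar> \<partial>M)"
    proof (rule integral_mono_AE[OF iXd[OF j]])
      show "integrable M (\<lambda>\<omega>. \<bar>X j (q j n) \<omega> - ce \<omega>\<bar>)" using iX ice by auto
      show "AE \<omega> in M. \<bar>X j (q j n) \<omega> - xt j n \<omega>\<bar> \<le> \<bar>X j (q j n) \<omega> - ce \<omega>\<bar>"
        using AEX
      proof (rule AE_mp, intro AE_I2 impI)
        fix \<omega> assume "\<forall>j\<in>{1..l}. \<forall>n. \<bar>X j n \<omega>\<bar> \<le> D1"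
        then have "\<bar>X j (q j n) \<omega>\<bar> \<le> D1" using j by auto
        then show "\<bar>X j (q j n) \<omega> - xt j n \<omega>\<bar> \<le> \<bar>X j (q j n) \<omega> - ce \<omega>\<bar>"
          unfolding xt_def ce_def by (auto simp: max_def min_def)
      qed
    qed
    also have "\<dots> \<le> bb" using bet[OF j, of "q j n"] unfolding ce_def Ft_def .
    finally show ?thesis .
  qed
  define P where "P = (\<lambda>n \<omega>. \<Prod>j=1..l. X j (q j n) \<omega>)"
  define Q where "Q = (\<lambda>n \<omega>. \<Prod>j=1..l. xt j n \<omega>)"
  define \<Phi> where "\<Phi> = (\<lambda>k \<omega>. \<Prod>n\<in>\<Gamma> k. exp (\<i> * complex_of_real (s * P n \<omega>)))"
  define \<Psi> where "\<Psi> = (\<lambda>k \<omega>. \<Prod>n\<in>\<Gamma> k. exp (\<i> * complex_of_real (s * Q n \<omega>)))"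
  define \<Theta> where "\<Theta> = (\<lambda>k \<omega>. \<Prod>n\<in>\<Gamma> k. \<Sum>b\<le>d. (\<i> * complex_of_real (s * Q n \<omega>))^b / fact b)"
  have Pm: "P n \<in> borel_measurable M" for n unfolding P_def using Xm by (intro borel_measurable_prod) auto
  have Qm: "Q n \<in> borel_measurable M" for n unfolding Q_def using xtM by (intro borel_measurable_prod) auto
  have Qb: "\<bar>s * Q n \<omega>\<bar> \<le> c0" for n \<omega>
  proof -
    have "\<bar>Q n \<omega>\<bar> \<le> D1^l" unfolding Q_def abs_prod using xtb
    proof -
      have "(\<Prod>j=1..l. \<bar>xt j n \<omega>\<bar>) \<le> (\<Prod>j=1..l. D1)" using xtb by (intro prod_mono) auto
      then show "(\<Prod>j=1..l. \<bar>xt j n \<omega>\<bar>) \<le> D1^l" by simp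
    qed
    then show ?thesis unfolding c0_def abs_mult by (intro mult_left_mono) auto
  qed
  have \<Phi>m: "\<Phi> k \<in> borel_measurable M" for k unfolding \<Phi>_def using Pm by measurable
  have \<Psi>m: "\<Psi> k \<in> borel_measurable M" for k unfolding \<Psi>_def using Qm by measurable
  have \<Theta>m: "\<Theta> k \<in> borel_measurable M" for k unfolding \<Theta>_def using Qm by measurable
  have n\<Phi>: "norm (\<Phi> k \<omega>) = 1" for k \<omega> unfolding \<Phi>_def by (simp add: prod_norm[symmetric])
  have n\<Psi>: "norm (\<Psi> k \<omega>) = 1" for k \<omega> unfolding \<Psi>_def by (simp add: prod_norm[symmetric])
  define r where "r = c0 ^ Suc d / fact (Suc d)"
  have stepC: "norm ((\<integral>\<omega>. (\<Prod>k=1..m. \<Theta> k \<omega>) \<partial>M) - (\<Prod>k=1..m. \<integral>\<omega>. \<Theta> k \<omega> \<partial>M))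
      \<le> 32 * aa * l * m * exp (\<bar>s\<bar> * D1^(2 * l)) ^ S"
  proof -
    have "norm ((\<integral>\<omega>. (\<Prod>k\<in>{1..m}. \<Prod>n\<in>\<Gamma> k. \<Sum>b\<le>d. (\<i> * complex_of_real (s * (\<Prod>j\<in>{1..l}. xt j n \<omega>)))^b / fact b) \<partial>M)
      - (\<Prod>k\<in>{1..m}. \<integral>\<omega>. (\<Prod>n\<in>\<Gamma> k. \<Sum>b\<le>d. (\<i> * complex_of_real (s * (\<Prod>j\<in>{1..l}. xt j n \<omega>)))^b / fact b) \<partial>M))
      \<le> 32 * aa * card {1..l} * card {1..m} * exp (\<bar>s\<bar> * D1^(2 * card {1..l})) ^ (\<Sum>k\<in>{1..m}. card (\<Gamma> k))"
    proof (rule taylor_dec[OF M _ _ _ aa0 D1(1), where Pre="\<lambda>j k. F (-\<infinity>) (ereal (real (hi j k + h)))"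
          and Post="\<lambda>j k. F (ereal (real (hi j k + h + g))) \<infinity>"])
      fix j k A B assume "j \<in> {1..l}" "k \<in> {1..m}" "A \<in> sets (F (-\<infinity>) (ereal (real (hi j k + h))))"
        "B \<in> sets (F (ereal (real (hi j k + h + g))) \<infinity>)"
      then show "\<bar>measure M (A \<inter> B) - measure M A * measure M B\<bar> \<le> aa"
        using alph[of A "hi j k + h" B] by (simp add: add.assoc)
    next
      fix j k n assume h1: "j \<in> {1..l}" "k \<in> {1..m}" "n \<in> \<Gamma> k"
      show "xt j n \<in> borel_measurable (F (-\<infinity>) (ereal (real (hi j k + h))))"
      proof (rule meas_mono_sub[OF _ subalg _ xtF])
        show "subalgebra M (Ft j n)" by (simp add: Ft_def subalg)
        show "sets (Ft j n) \<subseteq> sets (F (-\<infinity>) (ereal (real (hi j k + h))))"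
          unfolding Ft_def using geo1[OF h1] by (intro mono) auto
      qed
    next
      fix j k j' k' n assume h1: "j \<in> {1..l}" "k \<in> {1..m}" "j' \<in> {1..l}" "k' \<in> {1..m}"
        "j < j' \<or> j = j' \<and> k < k'" "n \<in> \<Gamma> k'"
      show "xt j' n \<in> borel_measurable (F (ereal (real (hi j k + h + g))) \<infinity>)"
      proof (rule meas_mono_sub[OF _ subalg _ xtF])
        show "subalgebra M (Ft j' n)" by (simp add: Ft_def subalg)
        have "real (hi j k + h + g) \<le> real (lo j' k') - real h" using geo2 h1 by blast
        moreover have "lo j' k' \<le> q j' n" using geo1 h1 by blast
        ultimately have "real (hi j k + h + g) \<le> real (q j' n) - real h" by linarith
        then show "sets (Ft j' n) \<subseteq> sets (F (ereal (real (hi j k + h + g))) \<infinity>)"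
          unfolding Ft_def by (intro mono) auto
      qed
    qed (use \<Gamma>fin xtb subalg in auto)
    then show ?thesis unfolding \<Theta>_def Q_def S_def by simp
  qed
  define B where "B = (\<lambda>k. exp c0 ^ card (\<Gamma> k))"
  have ec0: "1 \<le> exp c0" using c0 by simp
  have B1: "1 \<le> B k" for k unfolding B_def using ec0 by (rule one_le_power)
  have tn: "norm (\<Sum>b\<le>d. (\<i> * complex_of_real (s * Q n \<omega>))^b / fact b) \<le> exp c0" for n \<omega>
    using order.trans[OF taylor_norm_le[of "s * Q n \<omega>" d]] Qb[of n \<omega>] by simp
  have en: "norm (exp (\<i> * complex_of_real (s * Q n \<omega>))) \<le> exp c0" for n \<omega> using ec0 by simp
  have n\<Theta>: "norm (\<Theta> k \<omega>) \<le> B k" for k \<omega>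
  proof -
    have "norm (\<Theta> k \<omega>) = (\<Prod>n\<in>\<Gamma> k. norm (\<Sum>b\<le>d. (\<i> * complex_of_real (s * Q n \<omega>))^b / fact b))"
      unfolding \<Theta>_def by (simp add: prod_norm)
    also have "\<dots> \<le> (\<Prod>n\<in>\<Gamma> k. exp c0)"
      by (intro prod_mono conjI norm_ge_zero tn)
    finally show ?thesis unfolding B_def by simp
  qed
  have dB: "(\<integral>\<omega>. norm (\<Psi> k \<omega> - \<Theta> k \<omega>) \<partial>M) \<le> B k * (card (\<Gamma> k) * r)" for k
  proof -
    have pw: "norm (\<Psi> k \<omega> - \<Theta> k \<omega>) \<le> B k * (card (\<Gamma> k) * r)" for \<omega>
    proof -
      have "norm (\<Psi> k \<omega> - \<Theta> k \<omega>) \<le> (\<Prod>n\<in>\<Gamma> k. exp c0) *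
          (\<Sum>n\<in>\<Gamma> k. norm (exp (\<i> * complex_of_real (s * Q n \<omega>)) - (\<Sum>b\<le>d. (\<i> * complex_of_real (s * Q n \<omega>))^b / fact b)))"
        unfolding \<Psi>_def \<Theta>_def
        by (rule norm_prod_diff_le[OF \<Gamma>fin en tn ec0])
      also have "\<dots> \<le> (\<Prod>n\<in>\<Gamma> k. exp c0) * (\<Sum>n\<in>\<Gamma> k. r)"
      proof (intro mult_left_mono sum_mono prod_nonneg)
        fix n assume "n \<in> \<Gamma> k"
        have "norm (exp (\<i> * complex_of_real (s * Q n \<omega>)) - (\<Sum>b\<le>d. (\<i> * complex_of_real (s * Q n \<omega>))^b / fact b))
            \<le> \<bar>s * Q n \<omega>\<bar> ^ Suc d / fact (Suc d)" by (rule iexp_approx1)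
        also have "\<dots> \<le> r" unfolding r_def using Qb by (intro divide_right_mono power_mono) auto
        finally show "norm (exp (\<i> * complex_of_real (s * Q n \<omega>)) - (\<Sum>b\<le>d. (\<i> * complex_of_real (s * Q n \<omega>))^b / fact b)) \<le> r" .
      qed auto
      finally show ?thesis unfolding B_def by (simp add: mult.commute)
    qed
    have int: "integrable M (\<lambda>\<omega>. norm (\<Psi> k \<omega> - \<Theta> k \<omega>))"
    proof (rule integrable_bounded_pm[OF M, where B="1 + B k"])
      show "(\<lambda>\<omega>. norm (\<Psi> k \<omega> - \<Theta> k \<omega>)) \<in> borel_measurable M" using \<Psi>m \<Theta>m by measurable
      fix \<omega> show "norm (norm (\<Psi> k \<omega> - \<Theta> k \<omega>)) \<le> 1 + B k"
        using norm_triangle_ineq4[of "\<Psi> k \<omega>" "\<Theta> k \<omega>"] n\<Psi>[of k \<omega>] n\<Theta>[of k \<omega>] by simp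
    qed
    have "(\<integral>\<omega>. norm (\<Psi> k \<omega> - \<Theta> k \<omega>) \<partial>M) \<le> (\<integral>\<omega>. B k * (card (\<Gamma> k) * r) \<partial>M)"
      by (rule integral_mono[OF int]) (use pw in auto)
    then show ?thesis by (simp add: prob_space)
  qed
  have dA: "(\<integral>\<omega>. norm (\<Phi> k \<omega> - \<Psi> k \<omega>) \<partial>M) \<le> card (\<Gamma> k) * (\<bar>s\<bar> * D1^l * l * bb)" for k
  proof -
    define R where "R = (\<lambda>\<omega>. \<Sum>n\<in>\<Gamma> k. \<bar>s\<bar> * (D1^l * (\<Sum>j=1..l. \<bar>X j (q j n) \<omega> - xt j n \<omega>\<bar>)))"
    have pw: "AE \<omega> in M. norm (\<Phi> k \<omega> - \<Psi> k \<omega>) \<le> R \<omega>"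
      using AEX
    proof (rule AE_mp, intro AE_I2 impI)
      fix \<omega> assume h: "\<forall>j\<in>{1..l}. \<forall>n. \<bar>X j n \<omega>\<bar> \<le> D1"
      have "norm (\<Phi> k \<omega> - \<Psi> k \<omega>) \<le> (\<Prod>n\<in>\<Gamma> k. 1) * (\<Sum>n\<in>\<Gamma> k. norm (exp (\<i> * complex_of_real (s * P n \<omega>)) - exp (\<i> * complex_of_real (s * Q n \<omega>))))"
        unfolding \<Phi>_def \<Psi>_def by (rule norm_prod_diff_le[OF \<Gamma>fin]) auto
      also have "\<dots> \<le> R \<omega>" unfolding R_def prod.neutral_const mult_1
      proof (intro sum_mono)
        fix n assume "n \<in> \<Gamma> k"
        have pq: "\<bar>P n \<omega> - Q n \<omega>\<bar> \<le> (\<Prod>j=1..l. D1) * (\<Sum>j=1..l. norm (X j (q j n) \<omega> - xt j n \<omega>))"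
          unfolding P_def Q_def real_norm_def[symmetric]
          by (rule norm_prod_diff_le) (use h xtb D1 in auto)
        have "norm (exp (\<i> * complex_of_real (s * P n \<omega>)) - exp (\<i> * complex_of_real (s * Q n \<omega>))) \<le> \<bar>s * P n \<omega> - s * Q n \<omega>\<bar>"
          by (rule iexp_diff_le)
        also have "\<dots> = \<bar>s\<bar> * \<bar>P n \<omega> - Q n \<omega>\<bar>" by (simp add: abs_mult flip: right_diff_distrib)
        also have "\<dots> \<le> \<bar>s\<bar> * ((\<Prod>j=1..l. D1) * (\<Sum>j=1..l. norm (X j (q j n) \<omega> - xt j n \<omega>)))"
          by (rule mult_left_mono[OF pq]) simp
        finally show "cmod (exp (\<i> * complex_of_real (s * P n \<omega>)) - exp (\<i> * complex_of_real (s * Q n \<omega>)))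
             \<le> \<bar>s\<bar> * (D1 ^ l * (\<Sum>j = 1..l. \<bar>X j (q j n) \<omega> - xt j n \<omega>\<bar>))"
          by simp
      qed
      finally show "norm (\<Phi> k \<omega> - \<Psi> k \<omega>) \<le> R \<omega>" .
    qed
    have iR: "integrable M R" unfolding R_def by (intro Bochner_Integration.integrable_sum Bochner_Integration.integrable_mult_right iXd) auto
    have "(\<integral>\<omega>. norm (\<Phi> k \<omega> - \<Psi> k \<omega>) \<partial>M) \<le> (\<integral>\<omega>. R \<omega> \<partial>M)"
    proof (rule integral_mono_AE[OF _ iR pw])
      show "integrable M (\<lambda>\<omega>. norm (\<Phi> k \<omega> - \<Psi> k \<omega>))"
      proof (rule integrable_bounded_pm[OF M, where B=2])
        show "(\<lambda>\<omega>. norm (\<Phi> k \<omega> - \<Psi> k \<omega>)) \<in> borel_measurable M" using \<Phi>m \<Psi>m by measurable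
        fix \<omega> show "norm (norm (\<Phi> k \<omega> - \<Psi> k \<omega>)) \<le> 2"
          using norm_triangle_ineq4[of "\<Phi> k \<omega>" "\<Psi> k \<omega>"] n\<Phi>[of k \<omega>] n\<Psi>[of k \<omega>] by simp
      qed
    qed
    also have "(\<integral>\<omega>. R \<omega> \<partial>M) = (\<Sum>n\<in>\<Gamma> k. \<bar>s\<bar> * (D1^l * (\<Sum>j=1..l. \<integral>\<omega>. \<bar>X j (q j n) \<omega> - xt j n \<omega>\<bar> \<partial>M)))"
    proof -
      have ig: "integrable M (\<lambda>\<omega>. \<Sum>j=1..l. \<bar>X j (q j n) \<omega> - xt j n \<omega>\<bar>)" for n
        by (intro Bochner_Integration.integrable_sum iXd) auto
      have "(\<integral>\<omega>. R \<omega> \<partial>M) = (\<Sum>n\<in>\<Gamma> k. \<integral>\<omega>. \<bar>s\<bar> * (D1^l * (\<Sum>j=1..l. \<bar>X j (q j n) \<omega> - xt j n \<omega>\<bar>)) \<partial>M)"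
        unfolding R_def by (rule Bochner_Integration.integral_sum) (intro Bochner_Integration.integrable_mult_right ig)
      also have "\<dots> = (\<Sum>n\<in>\<Gamma> k. \<bar>s\<bar> * (D1^l * (\<Sum>j=1..l. \<integral>\<omega>. \<bar>X j (q j n) \<omega> - xt j n \<omega>\<bar> \<partial>M)))"
        by (intro sum.cong refl) (simp add: Bochner_Integration.integral_sum iXd)
      finally show ?thesis .
    qed
    also have "\<dots> \<le> (\<Sum>n\<in>\<Gamma> k. \<bar>s\<bar> * (D1^l * (\<Sum>j=1..l. bb)))"
      using xtapp D1 by (intro sum_mono mult_left_mono) auto
    also have "\<dots> = card (\<Gamma> k) * (\<bar>s\<bar> * D1^l * l * bb)" by (simp add: algebra_simps)
    finally show ?thesis .
  qed
  have S1: "(\<Sum>k=1..m. \<integral>\<omega>. norm (\<Phi> k \<omega> - \<Psi> k \<omega>) \<partial>M) \<le> real S * (\<bar>s\<bar> * D1^l * l * bb)"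
  proof -
    have "(\<Sum>k=1..m. \<integral>\<omega>. norm (\<Phi> k \<omega> - \<Psi> k \<omega>) \<partial>M) \<le> (\<Sum>k=1..m. card (\<Gamma> k) * (\<bar>s\<bar> * D1^l * l * bb))"
      by (intro sum_mono dA)
    also have "\<dots> = (\<Sum>k=1..m. real (card (\<Gamma> k))) * (\<bar>s\<bar> * D1^l * l * bb)" by (rule sum_distrib_right[symmetric])
    also have "\<dots> = real S * (\<bar>s\<bar> * D1^l * l * bb)" by (simp add: S_def)
    finally show ?thesis .
  qed
  have A: "norm ((\<integral>\<omega>. (\<Prod>k=1..m. \<Phi> k \<omega>) \<partial>M) - (\<Prod>k=1..m. \<integral>\<omega>. \<Phi> k \<omega> \<partial>M))
     \<le> norm ((\<integral>\<omega>. (\<Prod>k=1..m. \<Psi> k \<omega>) \<partial>M) - (\<Prod>k=1..m. \<integral>\<omega>. \<Psi> k \<omega> \<partial>M))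
       + 2 * (\<Prod>k=1..m. 1) * (\<Sum>k=1..m. \<integral>\<omega>. norm (\<Phi> k \<omega> - \<Psi> k \<omega>) \<partial>M)"
    by (rule swap_approx[OF M]) (use \<Phi>m \<Psi>m n\<Phi> n\<Psi> in auto)
  have ES: "exp c0 ^ card (\<Gamma> k) \<le> exp c0 ^ S" if k: "k \<in> {1..m}" for k
  proof (rule power_increasing[OF _ ec0])
    show "card (\<Gamma> k) \<le> S" unfolding S_def using k by (intro member_le_sum) auto
  qed
  have S2: "(\<Sum>k=1..m. \<integral>\<omega>. norm (\<Psi> k \<omega> - \<Theta> k \<omega>) \<partial>M) \<le> exp c0 ^ S * (S * r)"
  proof -
    have r0: "0 \<le> r" unfolding r_def using c0 by simp
    have "(\<Sum>k=1..m. \<integral>\<omega>. norm (\<Psi> k \<omega> - \<Theta> k \<omega>) \<partial>M) \<le> (\<Sum>k=1..m. exp c0 ^ S * (card (\<Gamma> k) * r))"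
    proof (rule sum_mono)
      fix k assume k: "k \<in> {1..m}"
      show "(\<integral>\<omega>. norm (\<Psi> k \<omega> - \<Theta> k \<omega>) \<partial>M) \<le> exp c0 ^ S * (card (\<Gamma> k) * r)"
        by (rule order.trans[OF dB]) (unfold B_def, rule mult_right_mono[OF ES[OF k]], use r0 in simp)
    qed
    also have "\<dots> = exp c0 ^ S * ((\<Sum>k=1..m. real (card (\<Gamma> k))) * r)" by (simp only: sum_distrib_left[symmetric] sum_distrib_right[symmetric])
    also have "\<dots> = exp c0 ^ S * (S * r)" by (simp add: S_def)
    finally show ?thesis .
  qed
  have B: "norm ((\<integral>\<omega>. (\<Prod>k=1..m. \<Psi> k \<omega>) \<partial>M) - (\<Prod>k=1..m. \<integral>\<omega>. \<Psi> k \<omega> \<partial>M))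
     \<le> norm ((\<integral>\<omega>. (\<Prod>k=1..m. \<Theta> k \<omega>) \<partial>M) - (\<Prod>k=1..m. \<integral>\<omega>. \<Theta> k \<omega> \<partial>M))
       + 2 * (\<Prod>k=1..m. B k) * (\<Sum>k=1..m. \<integral>\<omega>. norm (\<Psi> k \<omega> - \<Theta> k \<omega>) \<partial>M)"
    by (rule swap_approx[OF M]) (use \<Psi>m \<Theta>m n\<Psi> n\<Theta> B1 in auto)
  have PB: "(\<Prod>k=1..m. B k) = exp c0 ^ S" unfolding B_def S_def by (simp add: power_sum)
  have fin: "norm ((\<integral>\<omega>. (\<Prod>k=1..m. \<Phi> k \<omega>) \<partial>M) - (\<Prod>k=1..m. \<integral>\<omega>. \<Phi> k \<omega> \<partial>M))
     \<le> 2 * (real S * (\<bar>s\<bar> * D1^l * l * bb)) + 2 * exp c0 ^ (2 * S) * S * r + 32 * aa * l * m * exp (\<bar>s\<bar> * D1^(2 * l)) ^ S"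
  proof -
    have "2 * (\<Prod>k=1..m. B k) * (\<Sum>k=1..m. \<integral>\<omega>. norm (\<Psi> k \<omega> - \<Theta> k \<omega>) \<partial>M) \<le> 2 * exp c0 ^ S * (exp c0 ^ S * (S * r))"
      unfolding PB using S2 by (intro mult_left_mono) auto
    also have "\<dots> = 2 * exp c0 ^ (2 * S) * S * r"
    proof -
      have e: "exp c0 ^ (2 * S) = exp c0 ^ S * exp c0 ^ S" by (simp add: mult_2 power_add)
      show ?thesis unfolding e by (simp only: ac_simps)
    qed
    finally have "2 * (\<Prod>k=1..m. B k) * (\<Sum>k=1..m. \<integral>\<omega>. norm (\<Psi> k \<omega> - \<Theta> k \<omega>) \<partial>M) \<le> 2 * exp c0 ^ (2 * S) * S * r" .
    moreover have "(\<Prod>k=1..m. (1::real)) = 1" by simp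
    ultimately show ?thesis using A B stepC S1 by (simp only: mult_1_right)
  qed
  show ?thesis using fin unfolding \<Phi>_def P_def S_def r_def c0_def D1_def by simp
qed


lemma alpha_le:
  assumes M: "prob_space M" and subalg: "\<And>k l'. subalgebra M (F k l')"
    and A: "A \<in> sets (F (-\<infinity>) (ereal (real k)))" and B: "B \<in> sets (F (ereal (real (k + n))) \<infinity>)"
  shows "\<bar>measure M (A \<inter> B) - measure M A * measure M B\<bar> \<le> mix_alpha M F n"
proof -
  interpret prob_space M by (rule M)
  have sM: "\<And>a b C. C \<in> sets (F a b) \<Longrightarrow> C \<in> sets M" using subalg by (auto simp: subalgebra_def)
  have b1: "\<bar>measure M (fst AB \<inter> snd AB) - measure M (fst AB) * measure M (snd AB)\<bar> \<le> 1"
    if "AB \<in> sets (F a b) \<times> sets (F c e)" for AB a b c e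
  proof -
    have "fst AB \<in> sets M" "snd AB \<in> sets M" using that sM by auto
    then have h: "0 \<le> prob (fst AB \<inter> snd AB)" "prob (fst AB \<inter> snd AB) \<le> 1" "0 \<le> prob (fst AB)" "prob (fst AB) \<le> 1"
      "0 \<le> prob (snd AB)" "prob (snd AB) \<le> 1" by auto
    have "0 \<le> prob (fst AB) * prob (snd AB)" "prob (fst AB) * prob (snd AB) \<le> 1"
      using h by (auto intro: mult_le_one)
    then show ?thesis using h by linarith
  qed
  define inner where "inner = (\<lambda>k. SUP AB\<in>sets (F (-\<infinity>) (ereal (real k))) \<times> sets (F (ereal (real (k + n))) \<infinity>).
        \<bar>measure M (fst AB \<inter> snd AB) - measure M (fst AB) * measure M (snd AB)\<bar>)"
  have ne: "sets (F a b) \<times> sets (F c e) \<noteq> {}" for a b c e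
    using sets.empty_sets[of "F a b"] sets.empty_sets[of "F c e"] by blast
  have i1: "inner k' \<le> 1" for k' unfolding inner_def by (rule cSUP_least[OF ne b1])
  have bdd: "bdd_above ((\<lambda>AB. \<bar>measure M (fst AB \<inter> snd AB) - measure M (fst AB) * measure M (snd AB)\<bar>) `
      (sets (F (-\<infinity>) (ereal (real k))) \<times> sets (F (ereal (real (k + n))) \<infinity>)))"
    by (rule bdd_aboveI2[where M=1]) (rule b1)
  have "\<bar>measure M (A \<inter> B) - measure M A * measure M B\<bar> \<le> inner k"
    unfolding inner_def
    using cSUP_upper[OF _ bdd, of "(A, B)"] A B by simp
  also have "inner k \<le> (SUP k\<in>(UNIV::nat set). inner k)"
    by (rule cSUP_upper) (auto intro: bdd_aboveI2[where M=1] i1)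
  finally show ?thesis unfolding mix_alpha_def inner_def .
qed

lemma integral_le_const_AE:
  fixes f :: "'a \<Rightarrow> real"
  assumes M: "prob_space M" and "AE x in M. f x \<le> c" and "0 \<le> c"
  shows "(\<integral>x. f x \<partial>M) \<le> c"
proof (cases "integrable M f")
  case True
  interpret prob_space M by (rule M)
  have "(\<integral>x. f x \<partial>M) \<le> (\<integral>x. c \<partial>M)" by (rule integral_mono_AE[OF True _ assms(2)]) simp
  then show ?thesis by (simp add: prob_space)
next
  case False
  then show ?thesis using assms(3) by (simp add: not_integrable_integral_eq)
qed

lemma beta_le:
  assumes M: "prob_space M" and subalg: "\<And>k l'. subalgebra M (F k l')"
    and Xm: "\<And>m. X m \<in> borel_measurable M" and bnd: "\<And>m. AE \<omega> in M. \<bar>X m \<omega>\<bar> \<le> D"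
  shows "(\<integral>\<omega>. \<bar>X m \<omega> - real_cond_exp M (F (ereal (real m - real n)) (ereal (real m + real n))) (X m) \<omega>\<bar> \<partial>M)
     \<le> approx_beta M F X n"
proof -
  interpret prob_space M by (rule M)
  define val where "val = (\<lambda>m. \<integral>\<omega>. \<bar>X m \<omega> - real_cond_exp M (F (ereal (real m - real n)) (ereal (real m + real n))) (X m) \<omega>\<bar> \<partial>M)"
  have D0: "0 \<le> D"
  proof (rule ccontr)
    assume "\<not> 0 \<le> D"
    then have "AE \<omega> in M. False" using bnd[of 0] by (rule_tac AE_mp) auto
    then show False by (simp add: AE_False)
  qed
  have vb: "val m' \<le> 2 * D" for m'
  proof -
    interpret S: finite_measure_subalgebra M "F (ereal (real m' - real n)) (ereal (real m' + real n))"
      by unfold_locales (rule subalg)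
    have iX: "integrable M (X m')"
      by (rule integrable_const_bound[where B=D]) (use bnd Xm in auto)
    have c1: "AE \<omega> in M. real_cond_exp M (F (ereal (real m' - real n)) (ereal (real m' + real n))) (X m') \<omega> \<le> D"
      by (rule S.real_cond_exp_le_c[OF iX]) (use bnd[of m'] in \<open>auto elim: AE_mp\<close>)
    have c2: "AE \<omega> in M. - D \<le> real_cond_exp M (F (ereal (real m' - real n)) (ereal (real m' + real n))) (X m') \<omega>"
      by (rule S.real_cond_exp_ge_c[OF iX]) (use bnd[of m'] in \<open>auto elim: AE_mp\<close>)
    have "AE \<omega> in M. \<bar>X m' \<omega> - real_cond_exp M (F (ereal (real m' - real n)) (ereal (real m' + real n))) (X m') \<omega>\<bar> \<le> 2 * D"
      using c1 c2 bnd[of m'] by eventually_elim auto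
    then show ?thesis unfolding val_def
      by (rule integral_le_const_AE[OF M]) (use D0 in auto)
  qed
  have "val m \<le> (SUP m\<in>(UNIV::nat set). val m)"
    by (rule cSUP_upper) (auto intro: bdd_aboveI2[where M="2*D"] vb)
  then show ?thesis unfolding approx_beta_def val_def .
qed

lemma iexp_sum_shift:
  assumes G: "finite G"
  shows "exp (\<i> * complex_of_real (s * (\<Sum>n\<in>G. (P n - A))))
       = exp (\<i> * complex_of_real (- s * A)) ^ card G * (\<Prod>n\<in>G. exp (\<i> * complex_of_real (s * P n)))"
proof -
  have "\<i> * complex_of_real (s * (\<Sum>n\<in>G. (P n - A))) = (\<Sum>n\<in>G. \<i> * complex_of_real (s * P n) + \<i> * complex_of_real (- s * A))"
    by (simp add: sum_distrib_left algebra_simps sum_subtractf)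
  then have "exp (\<i> * complex_of_real (s * (\<Sum>n\<in>G. (P n - A))))
     = (\<Prod>n\<in>G. exp (\<i> * complex_of_real (s * P n) + \<i> * complex_of_real (- s * A)))"
    by (simp add: exp_sum G)
  also have "\<dots> = (\<Prod>n\<in>G. exp (\<i> * complex_of_real (s * P n)) * exp (\<i> * complex_of_real (- s * A)))"
    by (intro prod.cong refl exp_add)
  also have "\<dots> = exp (\<i> * complex_of_real (- s * A)) ^ card G * (\<Prod>n\<in>G. exp (\<i> * complex_of_real (s * P n)))"
    by (simp add: prod.distrib mult.commute)
  finally show ?thesis .
qed

lemma phase:
  fixes P :: "nat \<Rightarrow> 'a \<Rightarrow> real" and \<Gamma> :: "nat \<Rightarrow> nat set"
  assumes M: "prob_space M" and K: "finite K" and G: "\<And>k. finite (\<Gamma> k)"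
  shows "cmod ((\<integral>\<omega>. exp (\<i> * complex_of_real (s * (\<Sum>k\<in>K. \<Sum>n\<in>\<Gamma> k. (P n \<omega> - A)))) \<partial>M)
        - (\<Prod>k\<in>K. \<integral>\<omega>. exp (\<i> * complex_of_real (s * (\<Sum>n\<in>\<Gamma> k. (P n \<omega> - A)))) \<partial>M))
    = cmod ((\<integral>\<omega>. (\<Prod>k\<in>K. \<Prod>n\<in>\<Gamma> k. exp (\<i> * complex_of_real (s * P n \<omega>))) \<partial>M)
        - (\<Prod>k\<in>K. \<integral>\<omega>. (\<Prod>n\<in>\<Gamma> k. exp (\<i> * complex_of_real (s * P n \<omega>))) \<partial>M))"
proof -
  define e0 where "e0 = exp (\<i> * complex_of_real (- s * A))"
  have ne0: "norm e0 = 1" unfolding e0_def by simp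
  define E where "E = (\<Prod>k\<in>K. e0 ^ card (\<Gamma> k))"
  have nE: "norm E = 1" unfolding E_def by (simp add: prod_norm[symmetric] norm_power ne0)
  have p1: "exp (\<i> * complex_of_real (s * (\<Sum>n\<in>\<Gamma> k. (P n \<omega> - A))))
      = e0 ^ card (\<Gamma> k) * (\<Prod>n\<in>\<Gamma> k. exp (\<i> * complex_of_real (s * P n \<omega>)))" for k \<omega>
    unfolding e0_def by (rule iexp_sum_shift[OF G])
  have p2: "exp (\<i> * complex_of_real (s * (\<Sum>k\<in>K. \<Sum>n\<in>\<Gamma> k. (P n \<omega> - A))))
      = E * (\<Prod>k\<in>K. \<Prod>n\<in>\<Gamma> k. exp (\<i> * complex_of_real (s * P n \<omega>)))" for \<omega>
  proof -
    have "exp (\<i> * complex_of_real (s * (\<Sum>k\<in>K. \<Sum>n\<in>\<Gamma> k. (P n \<omega> - A))))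
        = (\<Prod>k\<in>K. exp (\<i> * complex_of_real (s * (\<Sum>n\<in>\<Gamma> k. (P n \<omega> - A)))))"
    proof -
      have "\<i> * complex_of_real (s * (\<Sum>k\<in>K. \<Sum>n\<in>\<Gamma> k. (P n \<omega> - A)))
          = (\<Sum>k\<in>K. \<i> * complex_of_real (s * (\<Sum>n\<in>\<Gamma> k. (P n \<omega> - A))))"
        by (simp add: sum_distrib_left)
      then show ?thesis by (simp only: exp_sum[OF K])
    qed
    also have "\<dots> = (\<Prod>k\<in>K. e0 ^ card (\<Gamma> k) * (\<Prod>n\<in>\<Gamma> k. exp (\<i> * complex_of_real (s * P n \<omega>))))"
      by (simp only: p1)
    also have "\<dots> = E * (\<Prod>k\<in>K. \<Prod>n\<in>\<Gamma> k. exp (\<i> * complex_of_real (s * P n \<omega>)))"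
      unfolding E_def by (rule prod.distrib)
    finally show ?thesis .
  qed
  have "(\<integral>\<omega>. exp (\<i> * complex_of_real (s * (\<Sum>k\<in>K. \<Sum>n\<in>\<Gamma> k. (P n \<omega> - A)))) \<partial>M)
        - (\<Prod>k\<in>K. \<integral>\<omega>. exp (\<i> * complex_of_real (s * (\<Sum>n\<in>\<Gamma> k. (P n \<omega> - A)))) \<partial>M)
      = E * ((\<integral>\<omega>. (\<Prod>k\<in>K. \<Prod>n\<in>\<Gamma> k. exp (\<i> * complex_of_real (s * P n \<omega>))) \<partial>M)
        - (\<Prod>k\<in>K. \<integral>\<omega>. (\<Prod>n\<in>\<Gamma> k. exp (\<i> * complex_of_real (s * P n \<omega>))) \<partial>M))"
    unfolding p1 p2 E_def by (simp add: prod.distrib right_diff_distrib)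
  then show ?thesis by (simp add: norm_mult nE)
qed


lemma mono_gap:
  fixes f :: "nat \<Rightarrow> nat"
  assumes inc: "\<And>n. n \<ge> n0 \<Longrightarrow> f (Suc n) \<ge> f n + 1" and "n0 \<le> x" "x \<le> y"
  shows "f x + (y - x) \<le> f y"
  using assms(3)
proof (induction y)
  case 0
  then show ?case by simp
next
  case (Suc y)
  show ?case
  proof (cases "x \<le> y")
    case True
    then have "f x + (y - x) \<le> f y" using Suc by simp
    moreover have "f (Suc y) \<ge> f y + 1" using inc assms(2) True by simp
    ultimately show ?thesis using True by (simp add: Suc_diff_le)
  next
    case False
    then have "x = Suc y" using Suc.prems by simp
    then show ?thesis by simp
  qed
qed

lemma geometry:
  fixes q :: "nat \<Rightarrow> nat \<Rightarrow> nat" and \<theta> P N m h g l n0 :: nat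
  assumes inc: "\<And>j n. j \<in> {1..l} \<Longrightarrow> n \<ge> n0 \<Longrightarrow> q j (Suc n) \<ge> q j n + 1"
    and key: "\<And>j j'. j \<in> {1..l} \<Longrightarrow> j' \<in> {1..l} \<Longrightarrow> j < j' \<Longrightarrow> q j N + \<theta> \<le> q j' \<theta>"
    and th: "n0 \<le> \<theta>" and P: "\<theta> \<le> P" and mP: "m * P \<le> N" and hg: "2 * h + g = \<theta>"
  shows "\<And>j k n. j \<in> {1..l} \<Longrightarrow> k \<in> {1..m} \<Longrightarrow> n \<in> {n. \<theta> + (k - 1) * P \<le> n \<and> n \<le> k * P} \<Longrightarrow>
            q j (\<theta> + (k - 1) * P) \<le> q j n \<and> q j n \<le> q j (k * P)"
    and "\<And>j k j' k'. j \<in> {1..l} \<Longrightarrow> j' \<in> {1..l} \<Longrightarrow> k \<in> {1..m} \<Longrightarrow> k' \<in> {1..m} \<Longrightarrow>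
            (j < j' \<or> (j = j' \<and> k < k')) \<Longrightarrow> real (q j (k * P) + h + g) \<le> real (q j' (\<theta> + (k' - 1) * P)) - real h"
proof -
  have mg: "\<And>j x y. j \<in> {1..l} \<Longrightarrow> n0 \<le> x \<Longrightarrow> x \<le> y \<Longrightarrow> q j x + (y - x) \<le> q j y"
  proof -
    fix j x y assume j: "j \<in> {1..l}" and xy: "n0 \<le> x" "x \<le> y"
    have i: "\<And>n. n \<ge> n0 \<Longrightarrow> q j (Suc n) \<ge> q j n + 1" using inc j by auto
    show "q j x + (y - x) \<le> q j y" by (rule mono_gap[where f="q j", OF i xy])
  qed
  show "\<And>j k n. j \<in> {1..l} \<Longrightarrow> k \<in> {1..m} \<Longrightarrow> n \<in> {n. \<theta> + (k - 1) * P \<le> n \<and> n \<le> k * P} \<Longrightarrow>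
            q j (\<theta> + (k - 1) * P) \<le> q j n \<and> q j n \<le> q j (k * P)"
  proof -
    fix j k n assume j: "j \<in> {1..l}" and k: "k \<in> {1..m}" and n: "n \<in> {n. \<theta> + (k - 1) * P \<le> n \<and> n \<le> k * P}"
    have "q j (\<theta> + (k - 1) * P) + (n - (\<theta> + (k - 1) * P)) \<le> q j n" using n th j by (intro mg) auto
    moreover have "q j n + (k * P - n) \<le> q j (k * P)" using n th j by (intro mg) auto
    ultimately show "q j (\<theta> + (k - 1) * P) \<le> q j n \<and> q j n \<le> q j (k * P)" by simp
  qed
  show "\<And>j k j' k'. j \<in> {1..l} \<Longrightarrow> j' \<in> {1..l} \<Longrightarrow> k \<in> {1..m} \<Longrightarrow> k' \<in> {1..m} \<Longrightarrow>
            (j < j' \<or> (j = j' \<and> k < k')) \<Longrightarrow> real (q j (k * P) + h + g) \<le> real (q j' (\<theta> + (k' - 1) * P)) - real h"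
  proof -
    fix j k j' k' assume j: "j \<in> {1..l}" and j': "j' \<in> {1..l}" and k: "k \<in> {1..m}" and k': "k' \<in> {1..m}"
      and lex: "j < j' \<or> (j = j' \<and> k < k')"
    have kP: "n0 \<le> k * P" using k th P by (metis atLeastAtMost_iff le_trans mult_1 mult_le_mono1)
    have "q j (k * P) + \<theta> \<le> q j' (\<theta> + (k' - 1) * P)"
    proof (cases "j < j'")
      case True
      have "k * P \<le> N" using k mP by (meson atLeastAtMost_iff le_trans mult_le_mono1)
      then have "q j (k * P) \<le> q j N" using mg[OF j kP, of N] by simp
      also have "q j N + \<theta> \<le> q j' \<theta>" by (rule key[OF j j' True])
      moreover have "q j' \<theta> \<le> q j' (\<theta> + (k' - 1) * P)" using mg[OF j' th, of "\<theta> + (k' - 1) * P"] by simp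
      ultimately show ?thesis by linarith
    next
      case False
      then have jj: "j' = j" "k < k'" using lex by auto
      have "k \<le> k' - 1" using jj(2) by simp
      then have "k * P \<le> (k' - 1) * P" by (rule mult_le_mono1)
      then have "k * P + \<theta> \<le> \<theta> + (k' - 1) * P" by simp
      then have le: "k * P \<le> \<theta> + (k' - 1) * P" "\<theta> \<le> (\<theta> + (k' - 1) * P) - k * P" by linarith+
      have "q j (k * P) + ((\<theta> + (k' - 1) * P) - k * P) \<le> q j (\<theta> + (k' - 1) * P)" by (rule mg[OF j kP le(1)])
      then show ?thesis unfolding jj(1) using le(2) by linarith
    qed
    then show "real (q j (k * P) + h + g) \<le> real (q j' (\<theta> + (k' - 1) * P)) - real h"
      using hg by linarith
  qed
qed


lemma nat_floor_le: "0 \<le> x \<Longrightarrow> real (nat \<lfloor>x\<rfloor>) \<le> x"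
  by (simp add: of_nat_nat)

lemma nat_floor_ge: "0 \<le> x \<Longrightarrow> x - 1 \<le> real (nat \<lfloor>x\<rfloor>)"
  by (simp add: of_nat_nat)

lemma core:
  fixes M :: "'a measure"
    and l :: nat
    and X :: "nat \<Rightarrow> nat \<Rightarrow> 'a \<Rightarrow> real"
    and D :: real
    and F :: "ereal \<Rightarrow> ereal \<Rightarrow> 'a measure"
    and q :: "nat \<Rightarrow> nat \<Rightarrow> nat"
    and \<kappa> \<gamma> \<epsilon> L :: real
    and r p n0 :: nat
  assumes prob: "prob_space M"
    and l_pos: "l \<ge> 1"
    and stat: "\<And>j. j \<in> {1..l} \<Longrightarrow> stationary_process M (X j)"
    and bnd: "\<And>j n. j \<in> {1..l} \<Longrightarrow> AE \<omega> in M. \<bar>X j n \<omega>\<bar> \<le> D"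
    and subalg: "\<And>k l'. subalgebra M (F k l')"
    and mono: "\<And>k l' k' l''. k' \<le> k \<Longrightarrow> l' \<le> l'' \<Longrightarrow> sets (F k l') \<subseteq> sets (F k' l'')"
    and \<kappa>_pos: "\<kappa> > 0"
    and C1: "\<And>n. mix_alpha M F n + (MAX j\<in>{1..l}. approx_beta M F (X j) n) \<le> exp (- \<kappa> * real n) / \<kappa>"
    and r_pos: "r > 0"
    and C2: "\<And>n. q 1 n = r * n + p"
    and \<gamma>: "0 < \<gamma>" "\<gamma> < 1"
    and n0: "n0 > 1"
    and C3: "\<And>j n. j \<in> {2..l} \<Longrightarrow> n \<ge> n0 \<Longrightarrow> real (q j (n + 1)) \<ge> real (q j n) + real n powr \<gamma>"
    and C4: "\<And>j n. j \<in> {1..l - 1} \<Longrightarrow> n \<ge> n0 \<Longrightarrow>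
               real (q (j + 1) (nat \<lfloor>real n powr (1 - \<gamma>)\<rfloor>)) \<ge> real (q j n) * real n powr \<gamma>"
    and G1: "n0 \<le> nat \<lfloor>real N powr (1 - \<gamma>)\<rfloor>"
    and G2: "nat \<lfloor>real N powr (1 - \<gamma>)\<rfloor> \<le> theta_blk L \<epsilon> N"
    and G3: "2 * n0 \<le> N"
    and G4: "3 \<le> real N powr \<gamma>"
    and G5: "theta_blk L \<epsilon> N \<le> N"
  shows "cmod ((\<integral>\<omega>. exp (\<i> * complex_of_real (t / sqrt (real N)
                        * (\<Sum>k=1..m_blk L \<epsilon> N. Y_blk M l X q L \<epsilon> N k \<omega>))) \<partial>M)
                 - (\<Prod>k=1..m_blk L \<epsilon> N.
                      (\<integral>\<omega>. exp (\<i> * complex_of_real (t / sqrt (real N) * Y_blk M l X q L \<epsilon> N k \<omega>)) \<partial>M)))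
    \<le> 2 * ((\<Sum>k=1..m_blk L \<epsilon> N. card (Gamma_blk L \<epsilon> N k)) * (\<bar>t / sqrt (real N)\<bar> * (max 1 D)^l * l * (exp (- \<kappa> * real (theta_blk L \<epsilon> N div 4)) / \<kappa>)))
      + 2 * exp (\<bar>t / sqrt (real N)\<bar> * (max 1 D)^l) ^ (2 * (\<Sum>k=1..m_blk L \<epsilon> N. card (Gamma_blk L \<epsilon> N k))) * (\<Sum>k=1..m_blk L \<epsilon> N. card (Gamma_blk L \<epsilon> N k))
           * ((\<bar>t / sqrt (real N)\<bar> * (max 1 D)^l) ^ Suc N / fact (Suc N))
      + 32 * (exp (- \<kappa> * real (theta_blk L \<epsilon> N - 2 * (theta_blk L \<epsilon> N div 4))) / \<kappa>) * l * m_blk L \<epsilon> N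
          * exp (\<bar>t / sqrt (real N)\<bar> * (max 1 D)^(2 * l)) ^ (\<Sum>k=1..m_blk L \<epsilon> N. card (Gamma_blk L \<epsilon> N k))"
proof -
  interpret prob_space M by (rule prob)
  define \<theta> where "\<theta> = theta_blk L \<epsilon> N"
  define \<tau> where "\<tau> = tau_blk \<epsilon> N"
  define P where "P = \<theta> + \<tau>"
  define m where "m = m_blk L \<epsilon> N"
  define h where "h = \<theta> div 4"
  define g where "g = \<theta> - 2 * h"
  define n1 where "n1 = nat \<lfloor>real N powr (1 - \<gamma>)\<rfloor>"
  have th1: "n0 \<le> \<theta>" using G1 G2 unfolding \<theta>_def by linarith
  have thP: "\<theta> \<le> P" unfolding P_def by simp
  have P0: "0 < P" using th1 n0 thP by linarith
  have mP: "m * P \<le> N"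
  proof -
    have m_def': "m = nat \<lfloor>real N / real P\<rfloor>" unfolding m_def m_blk_def P_def \<theta>_def \<tau>_def by simp
    have "real m \<le> real N / real P" unfolding m_def' by (rule nat_floor_le) simp
    then have "real m * real P \<le> real N" using P0 by (simp add: field_simps)
    then show ?thesis by (metis of_nat_le_iff of_nat_mult)
  qed
  have hg: "2 * h + g = \<theta>" unfolding g_def h_def by simp
  have inc: "q j (Suc n) \<ge> q j n + 1" if j: "j \<in> {1..l}" and n: "n \<ge> n0" for j n
  proof (cases "j = 1")
    case True
    then show ?thesis using C2 r_pos by simp
  next
    case False
    then have j2: "j \<in> {2..l}" using j by auto
    have "1 \<le> real n powr \<gamma>" using n n0 \<gamma> by (intro ge_one_powr_ge_zero) auto
    then have "real (q j n) + 1 \<le> real (q j (n + 1))" using C3[OF j2 n] by linarith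
    then show ?thesis by simp
  qed
  have mg: "\<And>j x y. j \<in> {1..l} \<Longrightarrow> n0 \<le> x \<Longrightarrow> x \<le> y \<Longrightarrow> q j x + (y - x) \<le> q j y"
  proof -
    fix j x y assume j: "j \<in> {1..l}" and xy: "n0 \<le> x" "x \<le> y"
    have i: "\<And>n. n \<ge> n0 \<Longrightarrow> q j (Suc n) \<ge> q j n + 1" using inc j by auto
    show "q j x + (y - x) \<le> q j y" by (rule mono_gap[where f="q j", OF i xy])
  qed
  have key1: "q j N + \<theta> \<le> q (j + 1) \<theta>" if j: "j \<in> {1..l - 1}" for j
  proof -
    have jl: "j \<in> {1..l}" "j + 1 \<in> {1..l}" using j by auto
    have N0: "n0 \<le> N" using G3 by linarith
    have c4: "real (q j N) * real N powr \<gamma> \<le> real (q (j + 1) n1)" using C4[OF j N0] unfolding n1_def .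
    have "q (j + 1) n1 \<le> q (j + 1) \<theta>" using mg[OF jl(2) G1[folded n1_def], of \<theta>] G2 unfolding n1_def \<theta>_def by simp
    have qN: "q j n0 + (N - n0) \<le> q j N" using mg[OF jl(1) order.refl N0] .
    have "real (q j N) + real \<theta> \<le> real (q j N) * 3"
    proof -
      have "real \<theta> \<le> real N" using G5 unfolding \<theta>_def by simp
      also have "\<dots> \<le> 2 * real (q j N)" using qN G3 by linarith
      finally show ?thesis by linarith
    qed
    also have "\<dots> \<le> real (q j N) * real N powr \<gamma>" using G4 by (intro mult_left_mono) auto
    also have "\<dots> \<le> real (q (j + 1) \<theta>)" using c4 \<open>q (j + 1) n1 \<le> q (j + 1) \<theta>\<close> by linarith
    finally show ?thesis by linarith
  qed
  have key: "q j N + \<theta> \<le> q j' \<theta>" if j: "j \<in> {1..l}" and j': "j' \<in> {1..l}" and jj: "j < j'" for j j'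
    using j' jj
  proof (induction j' rule: less_induct)
    case (less j')
    show ?case
    proof (cases "j' = j + 1")
      case True
      then show ?thesis using key1[of j] j less.prems by auto
    next
      case False
      then have jm: "j < j' - 1" "j' - 1 \<in> {1..l}" using less.prems j by auto
      have IH: "q j N + \<theta> \<le> q (j' - 1) \<theta>" using less.IH[of "j' - 1"] jm less.prems by auto
      have "q (j' - 1) \<theta> \<le> q (j' - 1) N" using mg[OF jm(2) th1, of N] G5 unfolding \<theta>_def by simp
      moreover have "q (j' - 1) N + \<theta> \<le> q (j' - 1 + 1) \<theta>" using key1[of "j' - 1"] jm less.prems by auto
      ultimately show ?thesis using IH jm by simp
    qed
  qed
  have geo: "\<And>j k n. j \<in> {1..l} \<Longrightarrow> k \<in> {1..m} \<Longrightarrow> n \<in> {n. \<theta> + (k - 1) * P \<le> n \<and> n \<le> k * P} \<Longrightarrow>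
            q j (\<theta> + (k - 1) * P) \<le> q j n \<and> q j n \<le> q j (k * P)"
    "\<And>j k j' k'. j \<in> {1..l} \<Longrightarrow> j' \<in> {1..l} \<Longrightarrow> k \<in> {1..m} \<Longrightarrow> k' \<in> {1..m} \<Longrightarrow>
            (j < j' \<or> (j = j' \<and> k < k')) \<Longrightarrow> real (q j (k * P) + h + g) \<le> real (q j' (\<theta> + (k' - 1) * P)) - real h"
    by (rule geometry[OF inc key th1 thP mP hg]; assumption)+
  have Xm: "\<And>j n. j \<in> {1..l} \<Longrightarrow> X j n \<in> borel_measurable M"
    using stat unfolding stationary_process_def by blast
  have a0: "0 \<le> mix_alpha M F n" for n
    using alpha_le[OF prob subalg, where A="{}" and B="{}" and k=0 and n=n] by simp
  have b0: "0 \<le> approx_beta M F (X j) n" if j: "j \<in> {1..l}" for j n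
    by (rule order.trans[OF integral_nonneg_AE beta_le[OF prob subalg]])
       (use Xm[OF j] bnd[OF j] in auto)
  have bM: "approx_beta M F (X j) n \<le> (MAX j\<in>{1..l}. approx_beta M F (X j) n)" if j: "j \<in> {1..l}" for j n
    by (rule Max_ge) (use j in auto)
  have aB: "mix_alpha M F n \<le> exp (- \<kappa> * real n) / \<kappa>" for n
  proof -
    have one: "1 \<in> {1..l}" using l_pos by auto
    show ?thesis using C1[of n] bM[OF one, of n] b0[OF one, of n] by linarith
  qed
  have bB: "approx_beta M F (X j) n \<le> exp (- \<kappa> * real n) / \<kappa>" if j: "j \<in> {1..l}" for j n
    using C1[of n] bM[OF j, of n] a0[of n] by linarith
  have alph: "\<And>k A B. A \<in> sets (F (-\<infinity>) (ereal (real k))) \<Longrightarrow> B \<in> sets (F (ereal (real (k + g))) \<infinity>) \<Longrightarrow>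
                 \<bar>measure M (A \<inter> B) - measure M A * measure M B\<bar> \<le> exp (- \<kappa> * real g) / \<kappa>"
    by (rule order.trans[OF alpha_le[OF prob subalg] aB])
  have bet: "\<And>j n. j \<in> {1..l} \<Longrightarrow>
       (\<integral>\<omega>. \<bar>X j n \<omega> - real_cond_exp M (F (ereal (real n - real h)) (ereal (real n + real h))) (X j n) \<omega>\<bar> \<partial>M)
         \<le> exp (- \<kappa> * real h) / \<kappa>"
  proof -
    fix j n assume j: "j \<in> {1..l}"
    have "(\<integral>\<omega>. \<bar>X j n \<omega> - real_cond_exp M (F (ereal (real n - real h)) (ereal (real n + real h))) (X j n) \<omega>\<bar> \<partial>M)
       \<le> approx_beta M F (X j) h"
      by (rule beta_le[OF prob subalg]) (use Xm[OF j] bnd[OF j] in auto)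
    then show "(\<integral>\<omega>. \<bar>X j n \<omega> - real_cond_exp M (F (ereal (real n - real h)) (ereal (real n + real h))) (X j n) \<omega>\<bar> \<partial>M)
         \<le> exp (- \<kappa> * real h) / \<kappa>" using bB[OF j, of h] by linarith
  qed
  have \<Gamma>eq: "Gamma_blk L \<epsilon> N k = {n. \<theta> + (k - 1) * P \<le> n \<and> n \<le> k * P}" for k
    unfolding Gamma_blk_def \<theta>_def P_def \<tau>_def ..
  have \<Gamma>fin: "finite (Gamma_blk L \<epsilon> N k)" for k unfolding \<Gamma>eq by (rule finite_subset[of _ "{..k * P}"]) auto
  have aa0: "0 \<le> exp (- \<kappa> * real g) / \<kappa>" using \<kappa>_pos by simp
  have MB: "cmod ((\<integral>\<omega>. (\<Prod>k=1..m. \<Prod>n\<in>Gamma_blk L \<epsilon> N k. exp (\<i> * complex_of_real ((t / sqrt (real N)) * (\<Prod>j=1..l. X j (q j n) \<omega>)))) \<partial>M)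
           - (\<Prod>k=1..m. \<integral>\<omega>. (\<Prod>n\<in>Gamma_blk L \<epsilon> N k. exp (\<i> * complex_of_real ((t / sqrt (real N)) * (\<Prod>j=1..l. X j (q j n) \<omega>)))) \<partial>M))
    \<le> 2 * ((\<Sum>k=1..m. card (Gamma_blk L \<epsilon> N k)) * (\<bar>t / sqrt (real N)\<bar> * (max 1 D)^l * l * (exp (- \<kappa> * real h) / \<kappa>)))
      + 2 * exp (\<bar>t / sqrt (real N)\<bar> * (max 1 D)^l) ^ (2 * (\<Sum>k=1..m. card (Gamma_blk L \<epsilon> N k))) * (\<Sum>k=1..m. card (Gamma_blk L \<epsilon> N k))
           * ((\<bar>t / sqrt (real N)\<bar> * (max 1 D)^l) ^ Suc N / fact (Suc N))
      + 32 * (exp (- \<kappa> * real g) / \<kappa>) * l * m * exp (\<bar>t / sqrt (real N)\<bar> * (max 1 D)^(2 * l)) ^ (\<Sum>k=1..m. card (Gamma_blk L \<epsilon> N k))"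
  proof (rule main_bound[where lo="\<lambda>j k. q j (\<theta> + (k - 1) * P)" and hi="\<lambda>j k. q j (k * P)"
        and X=X and F=F and q=q and \<Gamma>="Gamma_blk L \<epsilon> N" and m=m and g=g and h=h and s="t / sqrt (real N)" and d=N
        and D=D and l=l and M=M and aa="exp (- \<kappa> * real g) / \<kappa>" and bb="exp (- \<kappa> * real h) / \<kappa>",
        OF prob l_pos Xm bnd subalg mono alph bet \<Gamma>fin _ _ aa0])
    fix j k n assume "j \<in> {1..l}" "k \<in> {1..m}" "n \<in> Gamma_blk L \<epsilon> N k"
    then show "q j (\<theta> + (k - 1) * P) \<le> q j n \<and> q j n \<le> q j (k * P)" using geo(1) unfolding \<Gamma>eq by blast
  next
    fix j k j' k' assume "j \<in> {1..l}" "j' \<in> {1..l}" "k \<in> {1..m}" "k' \<in> {1..m}" "j < j' \<or> j = j' \<and> k < k'"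
    then show "real (q j (k * P) + h + g) \<le> real (q j' (\<theta> + (k' - 1) * P)) - real h" using geo(2) by blast
  qed
  define A where "A = (\<Prod>j=1..l. \<integral>\<omega>. X j 0 \<omega> \<partial>M)"
  have Yeq: "Y_blk M l X q L \<epsilon> N k \<omega> = (\<Sum>n\<in>Gamma_blk L \<epsilon> N k. ((\<Prod>j=1..l. X j (q j n) \<omega>) - A))" for k \<omega>
    unfolding Y_blk_def Rfun_def A_def ..
  have PH: "cmod ((\<integral>\<omega>. exp (\<i> * complex_of_real (t / sqrt (real N)
                        * (\<Sum>k=1..m. Y_blk M l X q L \<epsilon> N k \<omega>))) \<partial>M)
                 - (\<Prod>k=1..m. (\<integral>\<omega>. exp (\<i> * complex_of_real (t / sqrt (real N) * Y_blk M l X q L \<epsilon> N k \<omega>)) \<partial>M)))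
     = cmod ((\<integral>\<omega>. (\<Prod>k=1..m. \<Prod>n\<in>Gamma_blk L \<epsilon> N k. exp (\<i> * complex_of_real ((t / sqrt (real N)) * (\<Prod>j=1..l. X j (q j n) \<omega>)))) \<partial>M)
           - (\<Prod>k=1..m. \<integral>\<omega>. (\<Prod>n\<in>Gamma_blk L \<epsilon> N k. exp (\<i> * complex_of_real ((t / sqrt (real N)) * (\<Prod>j=1..l. X j (q j n) \<omega>)))) \<partial>M))"
    unfolding Yeq by (rule phase[OF prob _ \<Gamma>fin]) simp
  show ?thesis using MB unfolding PH[unfolded m_def] m_def h_def g_def \<theta>_def .
qed


lemma theta_bounds:
  assumes N: "1 \<le> N" and Le: "0 \<le> L * \<epsilon>" "L * \<epsilon> \<le> 1/4"
  shows "real N powr (3/4) - 1 \<le> real (theta_blk L \<epsilon> N)" "theta_blk L \<epsilon> N \<le> N"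
proof -
  have x1: "1 \<le> real N" using N by simp
  have "real N powr (3/4) \<le> real N powr (1 - L * \<epsilon>)" using Le x1 by (intro powr_mono) auto
  moreover have "real N powr (1 - L * \<epsilon>) - 1 \<le> real (theta_blk L \<epsilon> N)"
    unfolding theta_blk_def by (rule nat_floor_ge) simp
  ultimately show "real N powr (3/4) - 1 \<le> real (theta_blk L \<epsilon> N)" by linarith
  have "real N powr (1 - L * \<epsilon>) \<le> real N powr 1" using Le x1 by (intro powr_mono) auto
  then have y: "real N powr (1 - L * \<epsilon>) \<le> real N" using x1 by simp
  have "real (theta_blk L \<epsilon> N) \<le> real N powr (1 - L * \<epsilon>)"
    unfolding theta_blk_def by (rule nat_floor_le) simp
  then have "real (theta_blk L \<epsilon> N) \<le> real N" using y by linarith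
  then show "theta_blk L \<epsilon> N \<le> N" by simp
qed

lemma G2_lemma:
  assumes N: "1 \<le> N" and "L * \<epsilon> \<le> \<gamma>"
  shows "nat \<lfloor>real N powr (1 - \<gamma>)\<rfloor> \<le> theta_blk L \<epsilon> N"
proof -
  have "real N powr (1 - \<gamma>) \<le> real N powr (1 - L * \<epsilon>)" using assms by (intro powr_mono) auto
  then show ?thesis unfolding theta_blk_def by (intro nat_mono floor_mono)
qed

lemma blocks_size:
  assumes th: "1 \<le> theta_blk L \<epsilon> N"
  shows "(\<Sum>k=1..m_blk L \<epsilon> N. card (Gamma_blk L \<epsilon> N k)) \<le> N" "m_blk L \<epsilon> N \<le> N"
proof -
  define \<theta> where "\<theta> = theta_blk L \<epsilon> N"
  define P where "P = \<theta> + tau_blk \<epsilon> N"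
  define m where "m = m_blk L \<epsilon> N"
  have P0: "0 < P" "\<theta> \<le> P" using th unfolding P_def \<theta>_def by auto
  have mP: "m * P \<le> N"
  proof -
    have m_def': "m = nat \<lfloor>real N / real P\<rfloor>" unfolding m_def m_blk_def P_def \<theta>_def by simp
    have "real m \<le> real N / real P" unfolding m_def' by (rule nat_floor_le) simp
    then have "real m * real P \<le> real N" using P0 by (simp add: field_simps)
    then show ?thesis by (metis of_nat_le_iff of_nat_mult)
  qed
  have card: "card (Gamma_blk L \<epsilon> N k) \<le> P" if k: "k \<in> {1..m}" for k
  proof -
    have "Gamma_blk L \<epsilon> N k = {\<theta> + (k - 1) * P .. k * P}" unfolding Gamma_blk_def \<theta>_def P_def by auto
    moreover have "k * P = (k - 1) * P + P" using k by (cases k) auto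
    ultimately show ?thesis using th \<theta>_def by simp
  qed
  have "(\<Sum>k=1..m. card (Gamma_blk L \<epsilon> N k)) \<le> (\<Sum>k=1..m. P)" by (rule sum_mono) (rule card)
  also have "\<dots> = m * P" by simp
  finally show "(\<Sum>k=1..m_blk L \<epsilon> N. card (Gamma_blk L \<epsilon> N k)) \<le> N" using mP unfolding m_def by simp
  have "m \<le> m * P" using P0 by simp
  then show "m_blk L \<epsilon> N \<le> N" using mP unfolding m_def by linarith
qed

lemma le_mult_ge1: "0 \<le> (a::real) \<Longrightarrow> 1 \<le> e \<Longrightarrow> a \<le> a * e"
  using mult_left_mono[of 1 e a] by simp

lemma err_bound:
  fixes t D \<kappa> :: real and l N m S \<theta> :: nat
  assumes N1: "1 \<le> N" and \<kappa>: "0 < \<kappa>" and SN: "S \<le> N" and mN: "m \<le> N"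
    and thl: "real N powr (3/4) - 1 \<le> real \<theta>"
    and small: "(\<bar>t\<bar> * (max 1 D)^(2*l) + 1) / sqrt (real N) \<le> exp (-3)"
  shows "2 * (real S * (\<bar>t / sqrt (real N)\<bar> * (max 1 D)^l * l * (exp (- \<kappa> * real (\<theta> div 4)) / \<kappa>)))
      + 2 * exp (\<bar>t / sqrt (real N)\<bar> * (max 1 D)^l) ^ (2 * S) * real S
           * ((\<bar>t / sqrt (real N)\<bar> * (max 1 D)^l) ^ Suc N / fact (Suc N))
      + 32 * (exp (- \<kappa> * real (\<theta> - 2 * (\<theta> div 4))) / \<kappa>) * l * m
          * exp (\<bar>t / sqrt (real N)\<bar> * (max 1 D)^(2 * l)) ^ S
    \<le> (2 * (\<bar>t\<bar> + 1) * (max 1 D)^l * l * exp (5 * \<kappa> / 4) / \<kappa>) * real N * exp ((\<bar>t\<bar> * (max 1 D)^(2*l) + 1) * sqrt (real N)) * exp (- (\<kappa> / 4) * real N powr (3/4))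
      + 2 * real N * exp (2 * (\<bar>t\<bar> * (max 1 D)^(2*l) + 1) * sqrt (real N)) * exp (- 3 * real N)
      + (32 * l * exp (5 * \<kappa> / 4) / \<kappa>) * real N * exp ((\<bar>t\<bar> * (max 1 D)^(2*l) + 1) * sqrt (real N)) * exp (- (\<kappa> / 4) * real N powr (3/4))"
proof -
  define x where "x = real N"
  define sx where "sx = sqrt x"
  define D1 where "D1 = max 1 D"
  define C where "C = \<bar>t\<bar> * D1^(2*l) + 1"
  define s where "s = t / sqrt (real N)"
  define Zh where "Zh = exp (5 * \<kappa> / 4) * exp (- (\<kappa> / 4) * x powr (3/4))"
  have x1: "1 \<le> x" unfolding x_def using N1 by simp
  have sx1: "1 \<le> sx" unfolding sx_def using x1 by simp
  have xsx: "x = sx * sx" unfolding sx_def using x1 by simp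
  have D1: "1 \<le> D1" unfolding D1_def by simp
  have Dl: "D1^l \<le> D1^(2*l)" using D1 by (intro power_increasing) auto
  have Dl1: "1 \<le> D1^l" using D1 by simp
  have C1: "1 \<le> C" unfolding C_def by simp
  have as: "\<bar>s\<bar> = \<bar>t\<bar> / sx" unfolding s_def sx_def x_def by simp
  have ast: "\<bar>s\<bar> \<le> \<bar>t\<bar>" unfolding as using sx1 by (simp add: divide_le_eq) (metis abs_ge_zero mult_le_cancel_left1 not_le order.trans)
  have c0: "\<bar>s\<bar> * D1^l \<le> C / sx"
  proof -
    have "\<bar>s\<bar> * D1^l \<le> \<bar>s\<bar> * D1^(2*l)" using Dl by (intro mult_left_mono) auto
    also have "\<dots> = (\<bar>t\<bar> * D1^(2*l)) / sx" unfolding as by simp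
    also have "\<dots> \<le> C / sx" unfolding C_def using sx1 by (intro divide_right_mono) auto
    finally show ?thesis .
  qed
  have c2: "\<bar>s\<bar> * D1^(2*l) \<le> C / sx"
  proof -
    have "\<bar>s\<bar> * D1^(2*l) = (\<bar>t\<bar> * D1^(2*l)) / sx" unfolding as by simp
    also have "\<dots> \<le> C / sx" unfolding C_def using sx1 by (intro divide_right_mono) auto
    finally show ?thesis .
  qed
  have sm: "C / sx \<le> exp (-3)" using small unfolding C_def D1_def sx_def x_def .
  have hlow: "x powr (3/4) / 4 - 1 \<le> real (\<theta> div 4)"
  proof -
    have "real \<theta> \<le> 4 * real (\<theta> div 4) + 3" by linarith
    then show ?thesis using thl unfolding x_def by linarith
  qed
  have eh: "exp (- \<kappa> * real (\<theta> div 4)) \<le> Zh"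
  proof -
    have "- \<kappa> * real (\<theta> div 4) \<le> 5 * \<kappa> / 4 + (- (\<kappa> / 4) * x powr (3/4))"
    proof -
      have "\<kappa> * x powr (3/4) \<le> \<kappa> * (4 + 4 * real (\<theta> div 4))"
        by (rule mult_left_mono) (use hlow \<kappa> in auto)
      then show ?thesis using \<kappa> by (simp add: algebra_simps)
    qed
    then show ?thesis unfolding Zh_def by (simp flip: exp_add)
  qed
  have eg: "exp (- \<kappa> * real (\<theta> - 2 * (\<theta> div 4))) \<le> Zh"
  proof -
    have "\<theta> div 4 \<le> \<theta> - 2 * (\<theta> div 4)" by linarith
    then have "exp (- \<kappa> * real (\<theta> - 2 * (\<theta> div 4))) \<le> exp (- \<kappa> * real (\<theta> div 4))"
      using \<kappa> by (intro exp_mono) (simp add: mult_le_cancel_left of_nat_le_iff)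
    then show ?thesis using eh by linarith
  qed
  have Zh0: "0 \<le> Zh" unfolding Zh_def by simp
  have eC: "1 \<le> exp (C * sx)" using C1 sx1 by simp
  have T1: "2 * (real S * (\<bar>s\<bar> * D1^l * l * (exp (- \<kappa> * real (\<theta> div 4)) / \<kappa>)))
      \<le> (2 * (\<bar>t\<bar> + 1) * D1^l * l * exp (5 * \<kappa> / 4) / \<kappa>) * x * exp (C * sx) * exp (- (\<kappa> / 4) * x powr (3/4))"
  proof -
    have a: "real S * \<bar>s\<bar> \<le> x * (\<bar>t\<bar> + 1)" using SN ast x1 unfolding x_def by (intro mult_mono) auto
    have b: "exp (- \<kappa> * real (\<theta> div 4)) / \<kappa> \<le> Zh / \<kappa>" using eh \<kappa> by (intro divide_right_mono) auto
    have K0: "0 \<le> 2 * D1^l * real l" using Dl1 by simp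
    have "2 * (real S * (\<bar>s\<bar> * D1^l * l * (exp (- \<kappa> * real (\<theta> div 4)) / \<kappa>)))
        = (2 * D1^l * real l) * (real S * \<bar>s\<bar>) * (exp (- \<kappa> * real (\<theta> div 4)) / \<kappa>)" by (simp add: ac_simps)
    also have "\<dots> \<le> (2 * D1^l * real l) * (x * (\<bar>t\<bar> + 1)) * (Zh / \<kappa>)"
    proof (rule mult_mono[OF mult_left_mono[OF a K0] b])
      show "0 \<le> 2 * D1 ^ l * real l * (x * (\<bar>t\<bar> + 1))" using K0 x1 by simp
      show "0 \<le> exp (- \<kappa> * real (\<theta> div 4)) / \<kappa>" using \<kappa> by simp
    qed
    also have "\<dots> \<le> (2 * D1^l * real l) * (x * (\<bar>t\<bar> + 1)) * (Zh / \<kappa>) * exp (C * sx)"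
      by (rule le_mult_ge1[OF _ eC]) (use K0 x1 Zh0 \<kappa> in simp)
    also have "\<dots> = (2 * (\<bar>t\<bar> + 1) * D1^l * l * exp (5 * \<kappa> / 4) / \<kappa>) * x * exp (C * sx) * exp (- (\<kappa> / 4) * x powr (3/4))"
      unfolding Zh_def by (simp add: field_simps)
    finally show ?thesis .
  qed
  have sx0: "0 < sx" using sx1 by simp
  have xs: "x * (C / sx) = C * sx" using xsx sx0 by (simp add: field_simps)
  have c00: "0 \<le> \<bar>s\<bar> * D1^l" using D1 by simp
  have T2: "2 * exp (\<bar>s\<bar> * D1^l) ^ (2 * S) * real S * ((\<bar>s\<bar> * D1^l) ^ Suc N / fact (Suc N))
      \<le> 2 * x * exp (2 * C * sx) * exp (- 3 * x)"
  proof -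
    have e1: "exp (\<bar>s\<bar> * D1^l) ^ (2 * S) \<le> exp (2 * C * sx)"
    proof -
      have "exp (\<bar>s\<bar> * D1^l) ^ (2 * S) = exp (real (2 * S) * (\<bar>s\<bar> * D1^l))" by (rule exp_of_nat_mult[symmetric])
      also have "\<dots> \<le> exp (2 * C * sx)"
      proof (rule exp_mono)
        have "real (2 * S) * (\<bar>s\<bar> * D1^l) \<le> (2 * x) * (C / sx)"
          by (rule mult_mono) (use SN c0 c00 x1 C1 sx0 in \<open>auto simp: x_def\<close>)
        also have "\<dots> = 2 * C * sx" using xs by simp
        finally show "real (2 * S) * (\<bar>s\<bar> * D1^l) \<le> 2 * C * sx" .
      qed
      finally show ?thesis .
    qed
    have e2: "(\<bar>s\<bar> * D1^l) ^ Suc N / fact (Suc N) \<le> exp (- 3 * x)"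
    proof -
      have "(\<bar>s\<bar> * D1^l) ^ Suc N / fact (Suc N) \<le> (\<bar>s\<bar> * D1^l) ^ Suc N"
      proof -
        have f1: "1 \<le> (fact (Suc N) :: real)" by (rule fact_ge_1)
        have "(\<bar>s\<bar> * D1^l) ^ Suc N \<le> (\<bar>s\<bar> * D1^l) ^ Suc N * fact (Suc N)"
          by (rule le_mult_ge1[OF _ f1]) (use c00 in simp)
        then show ?thesis using f1 by (simp add: divide_le_eq)
      qed
      also have "\<dots> \<le> exp (-3) ^ Suc N" using c00 c0 sm by (intro power_mono) auto
      also have "\<dots> = exp (real (Suc N) * (- 3))" by (rule exp_of_nat_mult[symmetric])
      also have "\<dots> = exp (- 3 * real (Suc N))" by (simp add: mult.commute)
      also have "\<dots> \<le> exp (- 3 * x)" unfolding x_def by simp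
      finally show ?thesis .
    qed
    have "2 * exp (\<bar>s\<bar> * D1^l) ^ (2 * S) * real S * ((\<bar>s\<bar> * D1^l) ^ Suc N / fact (Suc N))
        = 2 * (exp (\<bar>s\<bar> * D1^l) ^ (2 * S) * real S) * ((\<bar>s\<bar> * D1^l) ^ Suc N / fact (Suc N))" by simp
    also have "\<dots> \<le> 2 * (exp (2 * C * sx) * x) * exp (- 3 * x)"
      using e1 e2 SN c00 unfolding x_def by (intro mult_left_mono mult_mono) auto
    also have "\<dots> = 2 * x * exp (2 * C * sx) * exp (- 3 * x)" by simp
    finally show ?thesis .
  qed
  have T3: "32 * (exp (- \<kappa> * real (\<theta> - 2 * (\<theta> div 4))) / \<kappa>) * l * m * exp (\<bar>s\<bar> * D1^(2 * l)) ^ S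
      \<le> (32 * l * exp (5 * \<kappa> / 4) / \<kappa>) * x * exp (C * sx) * exp (- (\<kappa> / 4) * x powr (3/4))"
  proof -
    have e1: "exp (\<bar>s\<bar> * D1^(2 * l)) ^ S \<le> exp (C * sx)"
    proof -
      have "exp (\<bar>s\<bar> * D1^(2 * l)) ^ S = exp (real S * (\<bar>s\<bar> * D1^(2 * l)))" by (rule exp_of_nat_mult[symmetric])
      also have "\<dots> \<le> exp (C * sx)"
      proof (rule exp_mono)
        have "real S * (\<bar>s\<bar> * D1^(2 * l)) \<le> x * (C / sx)"
          by (rule mult_mono) (use SN c2 x1 in \<open>auto simp: x_def\<close>)
        then show "real S * (\<bar>s\<bar> * D1^(2 * l)) \<le> C * sx" using xs by simp
      qed
      finally show ?thesis .
    qed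
    have b: "exp (- \<kappa> * real (\<theta> - 2 * (\<theta> div 4))) / \<kappa> \<le> Zh / \<kappa>" using eg \<kappa> by (intro divide_right_mono) auto
    have "32 * (exp (- \<kappa> * real (\<theta> - 2 * (\<theta> div 4))) / \<kappa>) * l * m * exp (\<bar>s\<bar> * D1^(2 * l)) ^ S
        = (32 * real l) * ((exp (- \<kappa> * real (\<theta> - 2 * (\<theta> div 4))) / \<kappa>) * (real m * exp (\<bar>s\<bar> * D1^(2 * l)) ^ S))"
      by (simp add: ac_simps)
    also have "\<dots> \<le> (32 * real l) * ((Zh / \<kappa>) * (x * exp (C * sx)))"
    proof (rule mult_left_mono[OF mult_mono[OF b mult_mono[OF _ e1]]])
      show "real m \<le> x" using mN unfolding x_def by simp
    qed (use Zh0 \<kappa> x1 in auto)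
    also have "\<dots> = (32 * l * exp (5 * \<kappa> / 4) / \<kappa>) * x * exp (C * sx) * exp (- (\<kappa> / 4) * x powr (3/4))"
      unfolding Zh_def by (simp add: field_simps)
    finally show ?thesis .
  qed
  have "2 * (real S * (\<bar>s\<bar> * D1^l * l * (exp (- \<kappa> * real (\<theta> div 4)) / \<kappa>)))
      + 2 * exp (\<bar>s\<bar> * D1^l) ^ (2 * S) * real S * ((\<bar>s\<bar> * D1^l) ^ Suc N / fact (Suc N))
      + 32 * (exp (- \<kappa> * real (\<theta> - 2 * (\<theta> div 4))) / \<kappa>) * l * m * exp (\<bar>s\<bar> * D1^(2 * l)) ^ S
    \<le> (2 * (\<bar>t\<bar> + 1) * D1^l * l * exp (5 * \<kappa> / 4) / \<kappa>) * x * exp (C * sx) * exp (- (\<kappa> / 4) * x powr (3/4))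
      + 2 * x * exp (2 * C * sx) * exp (- 3 * x)
      + (32 * l * exp (5 * \<kappa> / 4) / \<kappa>) * x * exp (C * sx) * exp (- (\<kappa> / 4) * x powr (3/4))"
    using T1 T2 T3 by (intro add_mono)
  then show ?thesis unfolding s_def D1_def C_def x_def sx_def .
qed


lemma asym_main:
  fixes A1 A3 C k e :: real
  assumes "A1 > 0" "A3 > 0" "C > 0" "k > 0" "e > 0"
  shows "((\<lambda>x::real. (A1 * x * exp (C * sqrt x) * exp (- (k / 4) * x powr (3/4))
      + 2 * x * exp (2 * C * sqrt x) * exp (- 3 * x)
      + A3 * x * exp (C * sqrt x) * exp (- (k / 4) * x powr (3/4))) * x powr (e / 2 * sqrt x)) \<longlongrightarrow> 0) at_top"
  using assms by real_asymp

lemma asym_pow: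
  fixes b c :: real assumes "b > 0"
  shows "eventually (\<lambda>N::nat. c \<le> real N powr b) sequentially"
proof -
  have "eventually (\<lambda>x::real. c \<le> x powr b) at_top" using assms by real_asymp
  then show ?thesis using filterlim_real_sequentially unfolding filterlim_iff by blast
qed

lemma asym_small:
  fixes C :: real assumes "C \<ge> 0"
  shows "eventually (\<lambda>N::nat. C / sqrt (real N) \<le> exp (-3)) sequentially"
proof -
  have "eventually (\<lambda>x::real. C / sqrt x \<le> exp (-3)) at_top" using assms by real_asymp
  then show ?thesis using filterlim_real_sequentially unfolding filterlim_iff by blast
qed

theorem lemma4p1:
  fixes M :: "'a measure"
    and l :: nat
    and X :: "nat \<Rightarrow> nat \<Rightarrow> 'a \<Rightarrow> real"
    and D :: real
    and F :: "ereal \<Rightarrow> ereal \<Rightarrow> 'a measure"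
    and q :: "nat \<Rightarrow> nat \<Rightarrow> nat"
    and \<kappa> \<gamma> \<epsilon> L :: real
    and r p n0 :: nat
  assumes prob: "prob_space M"
    and l_pos: "l \<ge> 1"
    and stat: "\<And>j. j \<in> {1..l} \<Longrightarrow> stationary_process M (X j)"
    and bnd: "\<And>j n. j \<in> {1..l} \<Longrightarrow> AE \<omega> in M. \<bar>X j n \<omega>\<bar> \<le> D"
    and subalg: "\<And>k l'. subalgebra M (F k l')"
    and mono: "\<And>k l' k' l''. k' \<le> k \<Longrightarrow> l' \<le> l'' \<Longrightarrow> sets (F k l') \<subseteq> sets (F k' l'')"
    and \<kappa>_pos: "\<kappa> > 0"
    and C1: "\<And>n. mix_alpha M F n + (MAX j\<in>{1..l}. approx_beta M F (X j) n) \<le> exp (- \<kappa> * real n) / \<kappa>"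
    and r_pos: "r > 0"
    and C2: "\<And>n. q 1 n = r * n + p"
    and \<gamma>: "0 < \<gamma>" "\<gamma> < 1"
    and n0: "n0 > 1"
    and C3: "\<And>j n. j \<in> {2..l} \<Longrightarrow> n \<ge> n0 \<Longrightarrow> real (q j (n + 1)) \<ge> real (q j n) + real n powr \<gamma>"
    and C4: "\<And>j n. j \<in> {1..l - 1} \<Longrightarrow> n \<ge> n0 \<Longrightarrow>
               real (q (j + 1) (nat \<lfloor>real n powr (1 - \<gamma>)\<rfloor>)) \<ge> real (q j n) * real n powr \<gamma>"
    and \<epsilon>_pos: "\<epsilon> > 0"
    and L: "L \<ge> 4"
    and L\<epsilon>: "L * \<epsilon> < \<gamma> / 4"
  shows "\<forall>t::real. \<exists>K>0. \<forall>N::nat. real N \<ge> exp (2 / \<epsilon>) \<longrightarrow>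
           cmod ((\<integral>\<omega>. exp (\<i> * complex_of_real (t / sqrt (real N)
                        * (\<Sum>k=1..m_blk L \<epsilon> N. Y_blk M l X q L \<epsilon> N k \<omega>))) \<partial>M)
                 - (\<Prod>k=1..m_blk L \<epsilon> N.
                      (\<integral>\<omega>. exp (\<i> * complex_of_real (t / sqrt (real N) * Y_blk M l X q L \<epsilon> N k \<omega>)) \<partial>M)))
           \<le> K * real N powr (- (\<epsilon> / 2) * sqrt (real N))"
proof (intro allI)
  fix t :: real
  interpret prob_space M by (rule prob)
  define D1 where "D1 = max 1 D"
  define C where "C = \<bar>t\<bar> * D1^(2*l) + 1"
  define A1 where "A1 = 2 * (\<bar>t\<bar> + 1) * D1^l * l * exp (5 * \<kappa> / 4) / \<kappa>"
  define A3 where "A3 = 32 * l * exp (5 * \<kappa> / 4) / \<kappa>"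
  define Bnd where "Bnd = (\<lambda>x::real. A1 * x * exp (C * sqrt x) * exp (- (\<kappa> / 4) * x powr (3/4))
      + 2 * x * exp (2 * C * sqrt x) * exp (- 3 * x)
      + A3 * x * exp (C * sqrt x) * exp (- (\<kappa> / 4) * x powr (3/4)))"
  define LHS where "LHS = (\<lambda>N::nat. cmod ((\<integral>\<omega>. exp (\<i> * complex_of_real (t / sqrt (real N)
                        * (\<Sum>k=1..m_blk L \<epsilon> N. Y_blk M l X q L \<epsilon> N k \<omega>))) \<partial>M)
                 - (\<Prod>k=1..m_blk L \<epsilon> N.
                      (\<integral>\<omega>. exp (\<i> * complex_of_real (t / sqrt (real N) * Y_blk M l X q L \<epsilon> N k \<omega>)) \<partial>M))))"
  define e where "e = \<epsilon> / 2"
  have D1: "1 \<le> D1" unfolding D1_def by simp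
  have Le: "0 \<le> L * \<epsilon>" "L * \<epsilon> \<le> 1/4" "L * \<epsilon> \<le> \<gamma>" using L \<epsilon>_pos L\<epsilon> \<gamma> by auto
  have A1: "0 < A1" unfolding A1_def using l_pos D1 \<kappa>_pos by (intro divide_pos_pos mult_pos_pos) auto
  have A3: "0 < A3" unfolding A3_def using l_pos \<kappa>_pos by simp
  have C0: "0 < C" unfolding C_def using D1 by (simp add: add_nonneg_pos)
  have lim: "((\<lambda>N::nat. Bnd (real N) * real N powr (\<epsilon> / 2 * sqrt (real N))) \<longlongrightarrow> 0) sequentially"
    unfolding Bnd_def
    by (rule filterlim_compose[OF asym_main[OF A1 A3 C0 \<kappa>_pos \<epsilon>_pos] filterlim_real_sequentially])
  have ev6: "eventually (\<lambda>N. Bnd (real N) * real N powr (\<epsilon> / 2 * sqrt (real N)) < 1) sequentially"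
    using order_tendstoD(2)[OF lim, of 1] by simp
  have ev1: "eventually (\<lambda>N. real n0 + 1 \<le> real N powr (1 - \<gamma>)) sequentially"
    by (rule asym_pow) (use \<gamma> in simp)
  have ev3: "eventually (\<lambda>N. 2 * n0 \<le> N) sequentially" by (rule eventually_ge_at_top)
  have ev4: "eventually (\<lambda>N. 3 \<le> real N powr \<gamma>) sequentially" by (rule asym_pow) (use \<gamma> in simp)
  have ev7: "eventually (\<lambda>N. C / sqrt (real N) \<le> exp (-3)) sequentially" by (rule asym_small) (use C0 in simp)
  have ev8: "eventually (\<lambda>N. 1 \<le> N) sequentially" by (rule eventually_ge_at_top)
  have ev9: "eventually (\<lambda>N. 2 \<le> real N powr (3/4)) sequentially" by (rule asym_pow) simp
  have "eventually (\<lambda>N. LHS N \<le> real N powr (- (\<epsilon> / 2) * sqrt (real N))) sequentially"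
    using ev1 ev3 ev4 ev6 ev7 ev8 ev9
  proof eventually_elim
    case (elim N)
    have N1: "1 \<le> N" using elim by simp
    have thl: "real N powr (3/4) - 1 \<le> real (theta_blk L \<epsilon> N)" using theta_bounds(1)[OF N1 Le(1,2)] .
    have th1: "1 \<le> theta_blk L \<epsilon> N" using thl elim by linarith
    have G1: "n0 \<le> nat \<lfloor>real N powr (1 - \<gamma>)\<rfloor>"
    proof -
      have "real N powr (1 - \<gamma>) - 1 \<le> real (nat \<lfloor>real N powr (1 - \<gamma>)\<rfloor>)" by (rule nat_floor_ge) simp
      then show ?thesis using elim by linarith
    qed
    have core: "LHS N \<le> 2 * ((\<Sum>k=1..m_blk L \<epsilon> N. card (Gamma_blk L \<epsilon> N k)) * (\<bar>t / sqrt (real N)\<bar> * (max 1 D)^l * l * (exp (- \<kappa> * real (theta_blk L \<epsilon> N div 4)) / \<kappa>)))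
      + 2 * exp (\<bar>t / sqrt (real N)\<bar> * (max 1 D)^l) ^ (2 * (\<Sum>k=1..m_blk L \<epsilon> N. card (Gamma_blk L \<epsilon> N k))) * (\<Sum>k=1..m_blk L \<epsilon> N. card (Gamma_blk L \<epsilon> N k))
           * ((\<bar>t / sqrt (real N)\<bar> * (max 1 D)^l) ^ Suc N / fact (Suc N))
      + 32 * (exp (- \<kappa> * real (theta_blk L \<epsilon> N - 2 * (theta_blk L \<epsilon> N div 4))) / \<kappa>) * l * m_blk L \<epsilon> N
          * exp (\<bar>t / sqrt (real N)\<bar> * (max 1 D)^(2 * l)) ^ (\<Sum>k=1..m_blk L \<epsilon> N. card (Gamma_blk L \<epsilon> N k))"
      unfolding LHS_def
      by (rule core[OF prob l_pos stat bnd subalg mono \<kappa>_pos C1 r_pos C2 \<gamma> n0 C3 C4 G1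
            G2_lemma[OF N1 Le(3)] elim(2) elim(3) theta_bounds(2)[OF N1 Le(1,2)]])
    have eb: "\<dots> \<le> Bnd (real N)"
      unfolding Bnd_def A1_def A3_def C_def D1_def
      by (rule err_bound[OF N1 \<kappa>_pos blocks_size[OF th1] thl]) (use elim(5) in \<open>simp add: C_def D1_def\<close>)
    have pos: "0 < real N powr (\<epsilon> / 2 * sqrt (real N))" using N1 by simp
    have "Bnd (real N) \<le> 1 / real N powr (\<epsilon> / 2 * sqrt (real N))"
      using elim(4) pos by (simp add: field_simps)
    also have "\<dots> = real N powr (- (\<epsilon> / 2) * sqrt (real N))"
      using N1 by (simp add: powr_minus_divide)
    finally show ?case using core eb by linarith
  qed
  then obtain N1 where N1: "\<And>N. N \<ge> N1 \<Longrightarrow> LHS N \<le> real N powr (- (\<epsilon> / 2) * sqrt (real N))"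
    unfolding eventually_sequentially by blast
  have L2: "LHS N \<le> 2" for N
  proof -
    have a: "cmod (\<integral>\<omega>. exp (\<i> * complex_of_real (t / sqrt (real N) * (\<Sum>k=1..m_blk L \<epsilon> N. Y_blk M l X q L \<epsilon> N k \<omega>))) \<partial>M) \<le> 1"
      by (rule norm_integral_le_const[OF prob]) simp
    have b: "cmod (\<Prod>k=1..m_blk L \<epsilon> N. (\<integral>\<omega>. exp (\<i> * complex_of_real (t / sqrt (real N) * Y_blk M l X q L \<epsilon> N k \<omega>)) \<partial>M)) \<le> 1"
      unfolding prod_norm[symmetric]
      by (intro prod_le_1 conjI norm_ge_zero norm_integral_le_const[OF prob]) simp
    show ?thesis unfolding LHS_def using norm_triangle_ineq4 a b by (smt (verit))
  qed
  define K where "K = 1 + 2 * (\<Sum>N<N1. real N powr (\<epsilon> / 2 * sqrt (real N)))"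
  have K1: "1 \<le> K" unfolding K_def by (simp add: sum_nonneg)
  show "\<exists>K>0. \<forall>N::nat. real N \<ge> exp (2 / \<epsilon>) \<longrightarrow> LHS N \<le> K * real N powr (- (\<epsilon> / 2) * sqrt (real N))"
  proof (intro exI conjI allI impI)
    show "0 < K" using K1 by simp
    fix N :: nat assume NE: "real N \<ge> exp (2 / \<epsilon>)"
    have Npos: "0 < real N" using NE by (metis exp_gt_zero order_less_le_trans)
    have p0: "0 \<le> real N powr (- (\<epsilon> / 2) * sqrt (real N))" by simp
    show "LHS N \<le> K * real N powr (- (\<epsilon> / 2) * sqrt (real N))"
    proof (cases "N \<ge> N1")
      case True
      then show ?thesis using N1[OF True] le_mult_ge1[OF p0 K1] by (simp add: mult.commute)
    next
      case False
      then have Nl: "N \<in> {..<N1}" by simp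
      have "2 * real N powr (\<epsilon> / 2 * sqrt (real N)) \<le> 2 * (\<Sum>N<N1. real N powr (\<epsilon> / 2 * sqrt (real N)))"
        using member_le_sum[OF Nl, of "\<lambda>N. real N powr (\<epsilon> / 2 * sqrt (real N))"] by simp
      then have k: "2 * real N powr (\<epsilon> / 2 * sqrt (real N)) \<le> K" unfolding K_def by simp
      have one: "real N powr (\<epsilon> / 2 * sqrt (real N)) * real N powr (- (\<epsilon> / 2) * sqrt (real N)) = 1"
        using Npos by (simp add: powr_add[symmetric])
      have "LHS N \<le> 2" by (rule L2)
      also have "\<dots> = 2 * real N powr (\<epsilon> / 2 * sqrt (real N)) * real N powr (- (\<epsilon> / 2) * sqrt (real N))"
        using one by simp
      also have "\<dots> \<le> K * real N powr (- (\<epsilon> / 2) * sqrt (real N))"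
        by (rule mult_right_mono[OF k p0])
      finally show ?thesis .
    qed
  qed
qed

end
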